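(* Let $n,k\geq 1$ and let ${\bf m}=(m_1,\dots,m_k)$ be an array of nonnegative integers. For every permutation $\tau\in\mathfrak{S}_k$ there exists a bijection $\Phi_k:\mathcal{A}_n^k({\bf m})\to\mathcal{A}_n^k({\bf m}')$, where ${\bf m}'=(m_{\tau(1)},m_{\tau(2)},\dots,m_{\tau(k)})$, such that for every $\mathfrak{a}\in\mathcal{A}_n^k({\bf m})$, $$\bigl(\mathrm{DEZ}(\mathfrak{a}),\mathrm{Der}(\mathfrak{a})\bigr)=\bigl(\mathrm{DES}(\Phi_k(\mathfrak{a})),\mathrm{Der}(\Phi_k(\mathfrak{a}))\bigr).$$
   Context: $[n]=\{1,\dots,n\}$ and $\mathfrak{S}_n$ is the set of permutations of $[n]$, written in one-line notation $\pi=\pi(1)\cdots\pi(n)$; $\mathrm{FIX}(\pi)=\{i:\pi(i)=i\}$. For an integer $k\ge 1$, a $k$-arrangement of $[n]$ is a pair $\mathfrak{a}=(\pi,\phi)$ with $\pi\in\mathfrak{S}_n$ and $\phi:\mathrm{FIX}(\pi)\to\{-1,-2,\dots,-k\}$ an arbitrary function; $\mathcal{A}_n^k$ is the set of them. The positive reduction $\mathrm{red}^+(w)$ of a word $w$ over the integers is obtained by replacing every occurrence of the $i$-th smallest positive letter of $w$ by $i$, for all $i$ (negative letters are unchanged). The derangement form $\mathrm{df}_k(\mathfrak{a})$ is the word obtained from $\pi(1)\cdots\pi(n)$ by replacing $\pi(i)$ with $\phi(i)$ for each $i\in\mathrm{FIX}(\pi)$ and then applying positive reduction. The permutation form $\mathrm{pf}_k(\mathfrak{a})$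 is obtained in the same way, except that $\pi(i)$ is replaced by $\phi(i)$ only for those $i\in\mathrm{FIX}(\pi)$ with $\phi(i)\neq -k$. For a word $w=w_1\cdots w_n$ over the integers, $\mathrm{DES}(w)=\{i\in[n-1]:w_i>w_{i+1}\}$ and $\mathrm{Pos}(w)$ is the subword of $w$ consisting of its positive letters. For $\mathfrak{a}\in\mathcal{A}_n^k$ set $\mathrm{DES}(\mathfrak{a})=\mathrm{DES}(\mathrm{pf}_k(\mathfrak{a}))$, $\mathrm{DEZ}(\mathfrak{a})=\mathrm{DES}(\mathrm{df}_k(\mathfrak{a}))$, $\mathrm{Der}(\mathfrak{a})=\mathrm{Pos}(\mathrm{df}_k(\mathfrak{a}))$, and $\mathrm{fix}_i(\mathfrak{a})=|\{j\in\mathrm{FIX}(\pi):\phi(j)=-i\}|$. For ${\bf m}=(m_1,\dots,m_k)$, $\mathcal{A}_n^k({\bf m})=\{\mathfrak{a}\in\mathcal{A}_n^k:\mathrm{fix}_i(\mathfrak{a})=m_i\text{ for }1\le i\le k\}$. *)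

theory Defs
  imports "HOL-Combinatorics.Permutations"
begin

text \<open>A k-arrangement of [n] is a pair (pi, phi): pi permutes {1..n} (and is the identity
  elsewhere); phi assigns to each fixed point i in {1..n} a value in {-k..-1}.
  To make the representation unique, phi is required to be 0 at every non-fixed point.\<close>

type_synonym arrangement = "(nat \<Rightarrow> nat) \<times> (nat \<Rightarrow> int)"

definition FIX :: "nat \<Rightarrow> (nat \<Rightarrow> nat) \<Rightarrow> nat set" where
  "FIX n \<pi> = {i \<in> {1..n}. \<pi> i = i}"

definition arrangements :: "nat \<Rightarrow> nat \<Rightarrow> arrangement set" where
  "arrangements n k = {(\<pi>, \<phi>). \<pi> permutes {1..n} \<and>
      (\<forall>i. if i \<in> FIX n \<pi> then \<phi> i \<in> {- int k .. -1} else \<phi> i = 0)}"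

definition red_pos :: "int list \<Rightarrow> int list" where
  "red_pos w = map (\<lambda>x. if 0 < x then int (card {y \<in> set w. 0 < y \<and> y < x}) + 1 else x) w"

definition df :: "nat \<Rightarrow> nat \<Rightarrow> arrangement \<Rightarrow> int list" where
  "df n k a = red_pos (map (\<lambda>i. if i \<in> FIX n (fst a) then snd a i else int (fst a i)) [1..<n+1])"

definition pf :: "nat \<Rightarrow> nat \<Rightarrow> arrangement \<Rightarrow> int list" where
  "pf n k a = red_pos (map (\<lambda>i. if i \<in> FIX n (fst a) \<and> snd a i \<noteq> - int k
                                then snd a i else int (fst a i)) [1..<n+1])"

text \<open>Descent set of a word w_1...w_n, positions 1-indexed.\<close>
definition DES_word :: "int list \<Rightarrow> nat set" where
  "DES_word w = {i. 1 \<le> i \<and> i < length w \<and> w ! (i - 1) > w ! i}"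

definition Pos :: "int list \<Rightarrow> int list" where
  "Pos w = filter (\<lambda>x. 0 < x) w"

definition DES :: "nat \<Rightarrow> nat \<Rightarrow> arrangement \<Rightarrow> nat set" where
  "DES n k a = DES_word (pf n k a)"

definition DEZ :: "nat \<Rightarrow> nat \<Rightarrow> arrangement \<Rightarrow> nat set" where
  "DEZ n k a = DES_word (df n k a)"

definition Der :: "nat \<Rightarrow> nat \<Rightarrow> arrangement \<Rightarrow> int list" where
  "Der n k a = Pos (df n k a)"

definition fixi :: "nat \<Rightarrow> nat \<Rightarrow> arrangement \<Rightarrow> nat" where
  "fixi n i a = card {j \<in> FIX n (fst a). snd a j = - int i}"

text \<open>m is indexed by 1..k (values outside are irrelevant).\<close>
definition arrangements_m :: "nat \<Rightarrow> nat \<Rightarrow> (nat \<Rightarrow> nat) \<Rightarrow> arrangement set" where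
  "arrangements_m n k m = {a \<in> arrangements n k. \<forall>i\<in>{1..k}. fixi n i a = m i}"

end

theory Submission
  imports Defs
begin


lemma card_fibers_bij:
  assumes fA: "finite A" and fB: "finite B"
    and eq: "\<And>x. card {a\<in>A. f a = x} = card {b\<in>B. g b = x}"
  shows "\<exists>h. bij_betw h A B \<and> (\<forall>a\<in>A. g (h a) = f a)"
proof -
  have ex: "\<forall>x. \<exists>hx. bij_betw hx {a\<in>A. f a = x} {b\<in>B. g b = x}"
    by (intro allI finite_same_card_bij) (use fA fB eq in auto)
  obtain H where H0: "\<forall>x. bij_betw (H x) {a\<in>A. f a = x} {b\<in>B. g b = x}"
    using choice[OF ex] by blast
  have H: "bij_betw (H x) {a\<in>A. f a = x} {b\<in>B. g b = x}" for x using H0 by blast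
  define h where "h a = H (f a) a" for a
  have img: "h a \<in> B \<and> g (h a) = f a" if "a \<in> A" for a
    using bij_betwE[OF H[of "f a"]] that unfolding h_def by blast
  have "inj_on h A"
  proof (rule inj_onI)
    fix a a' assume a: "a \<in> A" "a' \<in> A" "h a = h a'"
    then have "f a = f a'" using img by metis
    then have "H (f a) a = H (f a) a'" using a unfolding h_def by simp
    moreover have "inj_on (H (f a)) {x\<in>A. f x = f a}" using H bij_betw_def by blast
    ultimately show "a = a'" using a \<open>f a = f a'\<close> by (auto dest: inj_onD)
  qed
  moreover have "h ` A = B"
  proof
    show "h ` A \<subseteq> B" using img by blast
    show "B \<subseteq> h ` A"
    proof
      fix b assume b: "b \<in> B"
      have "b \<in> H (g b) ` {a\<in>A. f a = g b}" using H[of "g b"] b unfolding bij_betw_def by blast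
      then obtain a where "a \<in> A" "f a = g b" "b = H (g b) a" by blast
      then show "b \<in> h ` A" unfolding h_def by force
    qed
  qed
  ultimately show ?thesis using img unfolding bij_betw_def by blast
qed

lemma card_subset_split:
  assumes "finite A" "finite S"
  shows "card {x\<in>A. f x \<subseteq> S} = (\<Sum>T\<in>Pow S. card {x\<in>A. f x = T})"
proof -
  have "{x\<in>A. f x \<subseteq> S} = (\<Union>T\<in>Pow S. {x\<in>A. f x = T})" by auto
  then have "card {x\<in>A. f x \<subseteq> S} = card (\<Union>T\<in>Pow S. {x\<in>A. f x = T})" by simp
  also have "\<dots> = (\<Sum>T\<in>Pow S. card {x\<in>A. f x = T})"
    by (rule card_UN_disjoint) (use assms in auto)
  finally show ?thesis .
qed

lemma incl_excl_card:
  assumes fA: "finite A" and fB: "finite B"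
    and ffin: "\<And>x. x \<in> A \<Longrightarrow> finite (f x)" and gfin: "\<And>y. y \<in> B \<Longrightarrow> finite (g y)"
    and sub: "\<And>S. card {x\<in>A. f x \<subseteq> S} = card {y\<in>B. g y \<subseteq> S}"
  shows "card {x\<in>A. f x = S} = card {y\<in>B. g y = S}"
proof (cases "finite S")
  case False
  then have e: "{x\<in>A. f x = S} = {}" "{y\<in>B. g y = S} = {}" using ffin gfin by auto
  show ?thesis by (simp only: e card.empty)
next
  case True
  then show ?thesis
  proof (induction "card S" arbitrary: S rule: less_induct)
    case less
    have IH: "card {x\<in>A. f x = T} = card {y\<in>B. g y = T}" if "T \<in> Pow S - {S}" for T
    proof -
      have "T \<subset> S" using that by auto
      then have "card T < card S" using less.prems psubset_card_mono by blast
      moreover have "finite T" using \<open>T \<subset> S\<close> less.prems finite_subset by blast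
      ultimately show ?thesis using less.hyps by blast
    qed
    have fP: "finite (Pow S)" using less.prems by simp
    have S_in: "S \<in> Pow S" by simp
    have "card {x\<in>A. f x \<subseteq> S} = card {x\<in>A. f x = S} + (\<Sum>T\<in>Pow S - {S}. card {x\<in>A. f x = T})"
      using card_subset_split[OF fA less.prems, of f] sum.remove[OF fP S_in] by simp
    moreover have "card {y\<in>B. g y \<subseteq> S} = card {y\<in>B. g y = S} + (\<Sum>T\<in>Pow S - {S}. card {y\<in>B. g y = T})"
      using card_subset_split[OF fB less.prems, of g] sum.remove[OF fP S_in] by simp
    moreover have "(\<Sum>T\<in>Pow S - {S}. card {x\<in>A. f x = T}) = (\<Sum>T\<in>Pow S - {S}. card {y\<in>B. g y = T})"
      using IH by (intro sum.cong) auto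
    ultimately show ?case using sub[of S] by simp
  qed
qed


lemma DES_word_sub: "DES_word w \<subseteq> {1..<length w}"
  unfolding DES_word_def by auto

lemma DES_word_finite: "finite (DES_word w)"
  using DES_word_sub finite_subset by blast

lemma DES_word_empty_iff: "DES_word w = {} \<longleftrightarrow> sorted w"
proof
  assume "DES_word w = {}"
  then have nd: "\<not> w ! (i - 1) > w ! i" if "1 \<le> i" "i < length w" for i
    using that unfolding DES_word_def by blast
  have "w ! i \<le> w ! Suc i" if "Suc i < length w" for i
    using nd[of "Suc i"] that by simp
  then show "sorted w" by (simp add: sorted_iff_nth_Suc)
next
  assume "sorted w"
  then have "w ! (i - 1) \<le> w ! i" if "1 \<le> i" "i < length w" for i
    using that by (simp add: sorted_iff_nth_mono)
  then show "DES_word w = {}" unfolding DES_word_def by fastforce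
qed

lemma DES_append_cut:
  assumes ne: "xs \<noteq> []"
  shows "DES_word (xs @ ys) \<subseteq> insert (length xs) ((+) (length xs) ` T)
     \<longleftrightarrow> sorted xs \<and> DES_word ys \<subseteq> T"
proof
  assume H: "DES_word (xs @ ys) \<subseteq> insert (length xs) ((+) (length xs) ` T)"
  have "DES_word xs = {}"
  proof (rule ccontr)
    assume "DES_word xs \<noteq> {}"
    then obtain i where i: "1 \<le> i" "i < length xs" "xs ! (i - 1) > xs ! i"
      unfolding DES_word_def by blast
    then have "i \<in> DES_word (xs @ ys)" unfolding DES_word_def by (auto simp: nth_append split: if_splits)
    then show False using H i by auto
  qed
  moreover have "DES_word ys \<subseteq> T"
  proof
    fix j assume "j \<in> DES_word ys"
    then have j: "1 \<le> j" "j < length ys" "ys ! (j - 1) > ys ! j" unfolding DES_word_def by auto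
    then have "j + length xs \<in> DES_word (xs @ ys)" unfolding DES_word_def
      by (auto simp: nth_append)
    then show "j \<in> T" using H j by auto
  qed
  ultimately show "sorted xs \<and> DES_word ys \<subseteq> T" using DES_word_empty_iff by blast
next
  assume H: "sorted xs \<and> DES_word ys \<subseteq> T"
  show "DES_word (xs @ ys) \<subseteq> insert (length xs) ((+) (length xs) ` T)"
  proof
    fix i assume i: "i \<in> DES_word (xs @ ys)"
    then have i1: "1 \<le> i" "i < length xs + length ys" "(xs @ ys) ! (i - 1) > (xs @ ys) ! i"
      unfolding DES_word_def by auto
    consider "i < length xs" | "i = length xs" | "i > length xs" by linarith
    then show "i \<in> insert (length xs) ((+) (length xs) ` T)"
    proof cases
      case 1
      then have "i \<in> DES_word xs" using i1 unfolding DES_word_def by (auto simp: nth_append split: if_splits)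
      then show ?thesis using H DES_word_empty_iff by blast
    next
      case 2 then show ?thesis by simp
    next
      case 3
      then have "i - length xs \<in> DES_word ys" using i1 unfolding DES_word_def
        by (auto simp: nth_append split: if_splits)
      then have "i - length xs \<in> T" using H by blast
      then show ?thesis using 3 by force
    qed
  qed
qed

fun cuts :: "nat list \<Rightarrow> nat set" where
  "cuts [] = {}"
| "cuts (l # Ls) = insert l ((+) l ` cuts Ls)"

lemma compositions_exist:
  assumes "1 \<le> n" "S \<subseteq> {1..<n}"
  shows "\<exists>Ls. (\<forall>l\<in>set Ls. 0 < l) \<and> sum_list Ls = n \<and> cuts Ls = insert n S"
  using assms
proof (induction n arbitrary: S rule: less_induct)
  case (less n)
  show ?case
  proof (cases "S = {}")
    case True
    then show ?thesis using less.prems by (intro exI[of _ "[n]"]) auto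
  next
    case False
    have finS: "finite S" using less.prems finite_subset by blast
    define s where "s = Min S"
    have sS: "s \<in> S" using False finS s_def by simp
    have smin: "\<And>x. x \<in> S \<Longrightarrow> s \<le> x" using finS s_def by simp
    have s1: "1 \<le> s" "s < n" using sS less.prems by auto
    define S' where "S' = (\<lambda>x. x - s) ` (S - {s})"
    have S'sub: "S' \<subseteq> {1..<n - s}"
    proof
      fix y assume "y \<in> S'"
      then obtain x where x: "x \<in> S" "x \<noteq> s" "y = x - s" unfolding S'_def by blast
      then have "s < x" "x < n" using smin less.prems by force+
      then show "y \<in> {1..<n - s}" using x by auto
    qed
    have ns: "n - s < n" "1 \<le> n - s" using s1 by auto
    obtain Ls' where L: "\<forall>l\<in>set Ls'. 0 < l" "sum_list Ls' = n - s" "cuts Ls' = insert (n - s) S'"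
      using less.IH[OF ns S'sub] by blast
    have "(+) s ` S' = S - {s}"
    proof
      show "(+) s ` S' \<subseteq> S - {s}"
      proof
        fix z assume "z \<in> (+) s ` S'"
        then obtain x where "x \<in> S" "x \<noteq> s" "z = s + (x - s)" unfolding S'_def by blast
        then show "z \<in> S - {s}" using smin[of x] by auto
      qed
      show "S - {s} \<subseteq> (+) s ` S'"
      proof
        fix z assume z: "z \<in> S - {s}"
        then have "z = s + (z - s)" using smin by force
        then show "z \<in> (+) s ` S'" unfolding S'_def using z by blast
      qed
    qed
    then have "cuts (s # Ls') = insert n S" using L sS s1 by auto
    moreover have "sum_list (s # Ls') = n" using L s1 by simp
    ultimately show ?thesis using L s1 by (intro exI[of _ "s # Ls'"]) auto
  qed
qed

fun fillL :: "int list \<Rightarrow> nat \<Rightarrow> int list \<Rightarrow> int list" where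
  "fillL D r [] = []"
| "fillL D r (x # xs) = (if x = 0 then D ! r # fillL D (Suc r) xs else x # fillL D r xs)"

fun fillR :: "nat \<Rightarrow> int list \<Rightarrow> nat \<Rightarrow> int list \<Rightarrow> int list" where
  "fillR k D r [] = []"
| "fillR k D r (x # xs) = (if x = 0 then 2 * D ! r # fillR k D (Suc r) xs
     else if x = - int k then (2 * int r + 1) # fillR k D r xs else x # fillR k D r xs)"

lemma fillL_length[simp]: "length (fillL D r xs) = length xs"
  by (induction xs arbitrary: r) auto

lemma fillR_length[simp]: "length (fillR k D r xs) = length xs"
  by (induction xs arbitrary: r) auto

lemma fillL_append: "fillL D r (xs @ ys) = fillL D r xs @ fillL D (r + count_list xs 0) ys"
  by (induction xs arbitrary: r) auto

lemma fillR_append: "fillR k D r (xs @ ys) = fillR k D r xs @ fillR k D (r + count_list xs 0) ys"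
  by (induction xs arbitrary: r) auto

fun pieces_ok :: "(nat \<Rightarrow> int list \<Rightarrow> int list) \<Rightarrow> nat \<Rightarrow> nat list \<Rightarrow> int list \<Rightarrow> bool" where
  "pieces_ok F r [] w = (w = [])"
| "pieces_ok F r (l # Ls) w = (sorted (F r (take l w)) \<and> pieces_ok F (r + count_list (take l w) 0) Ls (drop l w))"

lemma DES_pieces:
  assumes app: "\<And>r xs ys. F r (xs @ ys) = F r xs @ F (r + count_list xs 0) ys"
    and len: "\<And>r xs. length (F r xs) = length xs"
  shows "length w = sum_list Ls \<Longrightarrow> \<forall>l\<in>set Ls. 0 < l \<Longrightarrow>
     DES_word (F r w) \<subseteq> cuts Ls \<longleftrightarrow> pieces_ok F r Ls w"
proof (induction Ls arbitrary: r w)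
  case Nil
  then have "w = []" by simp
  then have "DES_word (F r w) = {}" using len DES_word_sub[of "F r w"] by auto
  then show ?case using \<open>w = []\<close> by simp
next
  case (Cons l Ls)
  have lpos: "0 < l" using Cons.prems by simp
  have ll: "l \<le> length w" using Cons.prems by simp
  have w: "w = take l w @ drop l w" by simp
  have Fw: "F r w = F r (take l w) @ F (r + count_list (take l w) 0) (drop l w)"
    by (subst w, rule app)
  have lenF: "length (F r (take l w)) = l" using len ll by simp
  have ne: "F r (take l w) \<noteq> []" using lenF lpos by auto
  have "DES_word (F r w) \<subseteq> cuts (l # Ls) \<longleftrightarrow>
        sorted (F r (take l w)) \<and> DES_word (F (r + count_list (take l w) 0) (drop l w)) \<subseteq> cuts Ls"
    using DES_append_cut[OF ne, of "F (r + count_list (take l w) 0) (drop l w)" "cuts Ls"]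
    unfolding Fw lenF by simp
  moreover have "length (drop l w) = sum_list Ls" using Cons.prems by simp
  ultimately show ?case using Cons.IH[of "drop l w"] Cons.prems by simp
qed


definition blkinc :: "int list \<Rightarrow> nat \<Rightarrow> nat \<Rightarrow> bool" where
  "blkinc D r z = (\<forall>i. r \<le> i \<longrightarrow> Suc i < r + z \<longrightarrow> D ! i < D ! Suc i)"

definition goodD :: "int list \<Rightarrow> bool" where
  "goodD D = ((\<forall>i<length D. 0 < D ! i \<and> D ! i \<noteq> int (Suc i)) \<and> distinct D)"

lemma fillL_nozero: "0 \<notin> set xs \<Longrightarrow> fillL D r xs = xs"
  by (induction xs arbitrary: r) auto

lemma fillL_rep0: "fillL D r (replicate z 0) = map (\<lambda>i. D ! i) [r..<r+z]"
  by (induction z arbitrary: r) (auto simp del: upt_Suc simp add: upt_conv_Cons)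

lemma fillL_set: "x \<in> set xs \<Longrightarrow> x \<noteq> 0 \<Longrightarrow> x \<in> set (fillL D r xs)"
  by (induction xs arbitrary: r) auto

lemma blkinc_Suc: "blkinc D r (Suc z) \<longleftrightarrow> blkinc D (Suc r) z \<and> (z > 0 \<longrightarrow> D ! r < D ! Suc r)"
proof
  assume H: "blkinc D r (Suc z)"
  have "blkinc D (Suc r) z" unfolding blkinc_def
  proof (intro allI impI)
    fix i assume "Suc r \<le> i" "Suc i < Suc r + z"
    then show "D ! i < D ! Suc i" using H unfolding blkinc_def by simp
  qed
  moreover have "z > 0 \<longrightarrow> D ! r < D ! Suc r" using H unfolding blkinc_def by simp
  ultimately show "blkinc D (Suc r) z \<and> (z > 0 \<longrightarrow> D ! r < D ! Suc r)" by blast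
next
  assume H: "blkinc D (Suc r) z \<and> (z > 0 \<longrightarrow> D ! r < D ! Suc r)"
  show "blkinc D r (Suc z)" unfolding blkinc_def
  proof (intro allI impI)
    fix i assume i: "r \<le> i" "Suc i < r + Suc z"
    show "D ! i < D ! Suc i"
    proof (cases "i = r")
      case True then show ?thesis using H i by simp
    next
      case False then show ?thesis using H i unfolding blkinc_def by simp
    qed
  qed
qed

lemma blkinc_0[simp]: "blkinc D r 0" "blkinc D r (Suc 0)"
  unfolding blkinc_def by auto

lemma blkinc_mono:
  assumes "blkinc D r z" "r \<le> i" "i \<le> j" "j < r + z"
  shows "D ! i + int (j - i) \<le> D ! j"
  using assms(3,4)
proof (induction j rule: dec_induct)
  case base then show ?case by simp
next
  case (step j)
  then have "D ! j < D ! Suc j" using assms(1,2) unfolding blkinc_def by simp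
  moreover have "D ! i + int (j - i) \<le> D ! j" using step by simp
  ultimately show ?case using step.hyps by (simp add: Suc_diff_le)
qed

lemma blkinc_sorted:
  assumes "blkinc D r z"
  shows "sorted (map (\<lambda>i. D ! i) [r..<r+z])"
proof -
  have "D ! (r + a) \<le> D ! (r + b)" if "a \<le> b" "b < z" for a b
    using blkinc_mono[OF assms, of "r + a" "r + b"] that by simp
  then show ?thesis by (auto simp: sorted_iff_nth_mono)
qed

lemma PL_dir:
  assumes "\<forall>x\<in>set p. x \<le> 0" "\<forall>i<r + count_list p 0. 0 < D ! i" "sorted (fillL D r p)"
  shows "p = filter (\<lambda>x. x \<noteq> 0) p @ replicate (count_list p 0) 0 \<and> sorted (filter (\<lambda>x. x \<noteq> 0) p)
     \<and> sorted (map (\<lambda>i. D ! i) [r..<r + count_list p 0])"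
  using assms
proof (induction p arbitrary: r)
  case Nil then show ?case by simp
next
  case (Cons x p)
  show ?case
  proof (cases "x = 0")
    case True
    then have s: "sorted (D ! r # fillL D (Suc r) p)" using Cons.prems by simp
    have IH: "p = filter (\<lambda>x. x \<noteq> 0) p @ replicate (count_list p 0) 0 \<and> sorted (filter (\<lambda>x. x \<noteq> 0) p)
     \<and> sorted (map (\<lambda>i. D ! i) [Suc r..<Suc r + count_list p 0])"
      using Cons.IH[of "Suc r"] Cons.prems True s by auto
    have Dr: "0 < D ! r" using Cons.prems True by simp
    have nz: "filter (\<lambda>x. x \<noteq> 0) p = []"
    proof (rule ccontr)
      assume "filter (\<lambda>x. x \<noteq> 0) p \<noteq> []"
      then obtain y where y: "y \<in> set p" "y \<noteq> 0" by (metis (mono_tags, lifting) filter_False)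
      then have "y \<in> set (fillL D (Suc r) p)" by (rule fillL_set)
      then have "D ! r \<le> y" using s by auto
      moreover have "y \<le> 0" using y Cons.prems by auto
      ultimately show False using Dr by simp
    qed
    then have pz: "p = replicate (count_list p 0) 0" using IH by simp
    have "fillL D (Suc r) p = map (\<lambda>i. D ! i) [Suc r..<Suc r + count_list p 0]"
      by (subst pz, subst fillL_rep0) simp
    then have "sorted (map (\<lambda>i. D ! i) [r..<r + count_list (x # p) 0])"
      using s True by (simp del: upt_Suc add: upt_conv_Cons)
    then show ?thesis using True nz pz by (simp add: replicate_append_same[symmetric])
  next
    case False
    then have s: "sorted (x # fillL D r p)" using Cons.prems by simp
    have IH: "p = filter (\<lambda>x. x \<noteq> 0) p @ replicate (count_list p 0) 0 \<and> sorted (filter (\<lambda>x. x \<noteq> 0) p)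
     \<and> sorted (map (\<lambda>i. D ! i) [r..<r + count_list p 0])"
      using Cons.IH[of r] Cons.prems False s by auto
    have "x \<le> y" if "y \<in> set (filter (\<lambda>x. x \<noteq> 0) p)" for y
      using s fillL_set[of y p D r] that by auto
    then show ?thesis using IH False by auto
  qed
qed

lemma PL_conv:
  assumes "sorted ns" "\<forall>x\<in>set ns. x < 0" "sorted (map (\<lambda>i. D ! i) [r..<r+z])"
    "\<forall>i<r + z. 0 < D ! i"
  shows "sorted (fillL D r (ns @ replicate z 0))"
proof -
  have n0: "0 \<notin> set ns" using assms(2) by fastforce
  then have c: "count_list ns 0 = 0" by (simp add: count_list_0_iff)
  have "fillL D r (ns @ replicate z 0) = ns @ map (\<lambda>i. D ! i) [r..<r+z]"
    using fillL_append[of D r ns] fillL_nozero[of ns D r] fillL_rep0 c assms(2) by fastforce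
  moreover have "x \<le> y" if "x \<in> set ns" "y \<in> set (map (\<lambda>i. D ! i) [r..<r+z])" for x y
    using that assms(2,4) by fastforce
  ultimately show ?thesis using assms(1,3) by (simp add: sorted_append)
qed


definition slot :: "int list \<Rightarrow> nat \<Rightarrow> nat \<Rightarrow> nat" where
  "slot D r z = length (filter (\<lambda>i. D ! i < int (Suc i)) [r..<r+z])"

definition canR :: "nat \<Rightarrow> int list \<Rightarrow> nat \<Rightarrow> int list \<Rightarrow> nat \<Rightarrow> nat \<Rightarrow> int list" where
  "canR k D r ns z f = ns @ replicate (slot D r z) 0 @ replicate f (- int k) @ replicate (z - slot D r z) 0"

lemma slot_le: "slot D r z \<le> z"
  unfolding slot_def using length_filter_le[of _ "[r..<r+z]"] by simp

lemma slot_0[simp]: "slot D r 0 = 0"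
  unfolding slot_def by simp

lemma slot_Suc: "slot D r (Suc z) = slot D r z + (if D ! (r + z) < int (Suc (r + z)) then 1 else 0)"
  unfolding slot_def by simp

lemma slot_Suc_left: "slot D r (Suc z) = (if D ! r < int (Suc r) then 1 else 0) + slot D (Suc r) z"
proof -
  have "[r..<r + Suc z] = r # [Suc r..<Suc r + z]" by (simp del: upt_Suc add: upt_conv_Cons)
  then show ?thesis unfolding slot_def by simp
qed

lemma blkinc_le: "blkinc D r z \<Longrightarrow> z' \<le> z \<Longrightarrow> blkinc D r z'"
  unfolding blkinc_def by auto

lemma FT_prefix:
  assumes "blkinc D r z" "\<forall>i. r \<le> i \<longrightarrow> i < r + z \<longrightarrow> D ! i \<noteq> int (Suc i)"
  shows "\<forall>i. r \<le> i \<longrightarrow> i < r + z \<longrightarrow> (D ! i < int (Suc i) \<longleftrightarrow> i < r + slot D r z)"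
  using assms
proof (induction z)
  case 0 then show ?case by simp
next
  case (Suc z)
  have b: "blkinc D r z" using Suc.prems blkinc_le by (metis le_SucI order_refl)
  have IH: "\<forall>i. r \<le> i \<longrightarrow> i < r + z \<longrightarrow> (D ! i < int (Suc i) \<longleftrightarrow> i < r + slot D r z)"
    using Suc.IH b Suc.prems(2) by auto
  define j where "j = r + z"
  show ?case
  proof (cases "D ! j < int (Suc j)")
    case True
    have allF: "D ! i < int (Suc i)" if "r \<le> i" "i < j" for i
    proof -
      have "D ! i + int (j - i) \<le> D ! j" using blkinc_mono[OF Suc.prems(1), of i j] that j_def by simp
      then show ?thesis using True that by linarith
    qed
    have "slot D r z = z"
    proof -
      have "\<not> (slot D r z < z)"
      proof
        assume "slot D r z < z"
        then have "D ! (r + slot D r z) < int (Suc (r + slot D r z))"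
          using allF[of "r + slot D r z"] j_def by simp
        moreover have "r \<le> r + slot D r z" "r + slot D r z < r + z" using \<open>slot D r z < z\<close> by auto
        ultimately show False using IH by blast
      qed
      then show ?thesis using slot_le[of D r z] by simp
    qed
    then have "slot D r (Suc z) = Suc z" using slot_Suc[of D r z] True j_def by simp
    then show ?thesis using allF True j_def by (metis add_Suc_right less_Suc_eq)
  next
    case False
    then have "slot D r (Suc z) = slot D r z" using slot_Suc[of D r z] j_def by simp
    moreover have "\<not> (j < r + slot D r z)" using slot_le[of D r z] j_def by simp
    ultimately show ?thesis using IH False j_def by (metis add_Suc_right less_Suc_eq)
  qed
qed

lemma fillR_nozero: "\<forall>x\<in>set xs. x \<noteq> 0 \<and> x \<noteq> - int k \<Longrightarrow> fillR k D r xs = xs"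
  by (induction xs arbitrary: r) auto

lemma fillR_rep0: "fillR k D r (replicate z 0) = map (\<lambda>i. 2 * D ! i) [r..<r+z]"
  by (induction z arbitrary: r) (auto simp del: upt_Suc simp add: upt_conv_Cons)

lemma fillR_repX: "1 \<le> k \<Longrightarrow> fillR k D r (replicate f (- int k)) = replicate f (2 * int r + 1)"
  by (induction f) auto

lemma count_list_rep[simp]: "count_list (replicate n x) y = (if x = y then n else 0)"
  by (induction n) auto

lemma fillR_canR:
  assumes "1 \<le> k" "\<forall>x\<in>set ns. x \<noteq> 0 \<and> x \<noteq> - int k"
  shows "fillR k D r (canR k D r ns z f) = ns @ map (\<lambda>i. 2 * D ! i) [r..<r + slot D r z]
     @ replicate f (2 * int (r + slot D r z) + 1) @ map (\<lambda>i. 2 * D ! i) [r + slot D r z..<r + z]"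
proof -
  define a where "a = slot D r z"
  have az: "a \<le> z" using slot_le a_def by simp
  have "0 \<notin> set ns" using assms(2) by blast
  then have c: "count_list ns 0 = 0" by (simp add: count_list_0_iff)
  have k0: "- int k \<noteq> 0" using assms(1) by simp
  have "fillR k D r (canR k D r ns z f) = ns @ fillR k D r (replicate a 0 @ replicate f (- int k) @ replicate (z - a) 0)"
    unfolding canR_def a_def[symmetric] using fillR_append[of k D r ns] fillR_nozero[OF assms(2)] c by simp
  also have "fillR k D r (replicate a 0 @ replicate f (- int k) @ replicate (z - a) 0)
     = map (\<lambda>i. 2 * D ! i) [r..<r + a] @ replicate f (2 * int (r + a) + 1) @ map (\<lambda>i. 2 * D ! i) [r + a..<r + z]"
    using fillR_append fillR_rep0 fillR_repX[OF assms(1)] az k0 by simp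
  finally show ?thesis unfolding a_def .
qed


lemma sorted_2D:
  assumes "blkinc D r z"
  shows "sorted (map (\<lambda>i. 2 * D ! i) [r..<r+z])"
proof -
  have "2 * D ! (r + a) \<le> 2 * D ! (r + b)" if "a \<le> b" "b < z" for a b
    using blkinc_mono[OF assms, of "r + a" "r + b"] that by simp
  then show ?thesis by (auto simp: sorted_iff_nth_mono)
qed

lemma PR_conv:
  assumes k1: "1 \<le> k" and ns: "sorted ns" "\<forall>x\<in>set ns. - int k < x \<and> x < 0"
    and b: "blkinc D r z" and Dp: "\<forall>i<r+z. 0 < D ! i \<and> D ! i \<noteq> int (Suc i)"
  shows "sorted (fillR k D r (canR k D r ns z f))"
proof -
  define a where "a = slot D r z"
  have az: "a \<le> z" using slot_le a_def by simp
  have FT: "\<forall>i. r \<le> i \<longrightarrow> i < r + z \<longrightarrow> (D ! i < int (Suc i) \<longleftrightarrow> i < r + a)"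
    using FT_prefix[OF b] Dp a_def by auto
  define A where "A = map (\<lambda>i. 2 * D ! i) [r..<r + a]"
  define X where "X = replicate f (2 * int (r + a) + 1)"
  define B where "B = map (\<lambda>i. 2 * D ! i) [r + a..<r + z]"
  have nsP: "\<forall>x\<in>set ns. x \<noteq> 0 \<and> x \<noteq> - int k" using ns(2) by fastforce
  have eq: "fillR k D r (canR k D r ns z f) = ns @ A @ X @ B"
    unfolding A_def X_def B_def a_def using fillR_canR[OF k1 nsP] by simp
  have "[r..<r+z] = [r..<r+a] @ [r+a..<r+z]" using upt_add_eq_append[of r "r+a" "z-a"] az by simp
  then have sAB: "sorted (A @ B)" using sorted_2D[OF b] unfolding A_def B_def by simp
  have AX: "x \<le> y" if xA: "x \<in> set A" and yX: "y \<in> set X" for x y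
  proof -
    obtain i where i: "r \<le> i" "i < r + a" "x = 2 * D ! i" using xA unfolding A_def by auto
    have "D ! i < int (Suc i)" using FT i az by auto
    then show ?thesis using yX i unfolding X_def by auto
  qed
  have XB: "x \<le> y" if xX: "x \<in> set X" and yB: "y \<in> set B" for x y
  proof -
    obtain i where i: "r + a \<le> i" "i < r + z" "y = 2 * D ! i" using yB unfolding B_def by auto
    have "\<not> D ! i < int (Suc i)" "D ! i \<noteq> int (Suc i)" using FT i Dp by auto
    then show ?thesis using xX i unfolding X_def by auto
  qed
  have sX: "sorted X" unfolding X_def by simp
  have sXB: "sorted (X @ B)" using sX sAB XB by (simp add: sorted_append)
  have AXB: "x \<le> y" if "x \<in> set A" "y \<in> set (X @ B)" for x y
    using that AX sAB by (auto simp: sorted_append)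
  have sAXB: "sorted (A @ X @ B)" using sXB AXB sAB by (simp add: sorted_append)
  have pos: "0 < y" if "y \<in> set (A @ X @ B)" for y
  proof -
    have "y \<in> set A \<or> y \<in> set X \<or> y \<in> set B" using that by auto
    then show ?thesis
    proof (elim disjE)
      assume "y \<in> set A" then show ?thesis unfolding A_def using Dp az by auto
    next
      assume "y \<in> set X" then show ?thesis unfolding X_def by auto
    next
      assume "y \<in> set B" then show ?thesis unfolding B_def using Dp by auto
    qed
  qed
  have "x \<le> y" if "x \<in> set ns" "y \<in> set (A @ X @ B)" for x y
    using pos[OF that(2)] ns(2) that(1) by fastforce
  then show ?thesis unfolding eq using ns(1) sAXB by (simp add: sorted_append)
qed


lemma PR_dir:
  assumes k1: "1 \<le> k"
  shows "\<forall>x\<in>set p. - int k \<le> x \<and> x \<le> 0 \<Longrightarrow>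
    (\<forall>i<r + count_list p 0. 0 < D ! i \<and> D ! i \<noteq> int (Suc i)) \<Longrightarrow>
    r + count_list p 0 \<le> length D \<Longrightarrow> distinct D \<Longrightarrow> sorted (fillR k D r p) \<Longrightarrow>
    p = canR k D r (filter (\<lambda>x. x \<noteq> 0 \<and> x \<noteq> - int k) p) (count_list p 0) (count_list p (- int k))
    \<and> sorted (filter (\<lambda>x. x \<noteq> 0 \<and> x \<noteq> - int k) p) \<and> blkinc D r (count_list p 0)"
proof (induction p arbitrary: r)
  case Nil then show ?case by (simp add: canR_def)
next
  case (Cons x p)
  define P where "P = (\<lambda>x::int. x \<noteq> 0 \<and> x \<noteq> - int k)"
  define ns where "ns = filter P p"
  define z where "z = count_list p 0"
  define f where "f = count_list p (- int k)"
  have k0: "- int k \<noteq> 0" using k1 by simp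
  have nsP: "\<forall>y\<in>set ns. y \<noteq> 0 \<and> y \<noteq> - int k" unfolding ns_def P_def by auto
  have nsneg: "\<forall>y\<in>set ns. y < 0" using Cons.prems(1) unfolding ns_def P_def by force
  consider (A) "x \<noteq> 0 \<and> x \<noteq> - int k" | (B) "x = 0" | (C) "x = - int k" by blast
  then show ?case
  proof cases
    case A
    have s: "sorted (x # fillR k D r p)" using Cons.prems(5) A by simp
    have IH: "p = canR k D r ns z f \<and> sorted ns \<and> blkinc D r z"
      using Cons.IH[of r] Cons.prems A unfolding ns_def z_def f_def P_def by simp
    have FL: "fillR k D r p = ns @ map (\<lambda>i. 2 * D ! i) [r..<r + slot D r z]
     @ replicate f (2 * int (r + slot D r z) + 1) @ map (\<lambda>i. 2 * D ! i) [r + slot D r z..<r + z]"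
      using IH fillR_canR[OF k1 nsP] by metis
    have "x \<le> y" if "y \<in> set ns" for y using s that unfolding FL by auto
    then have so: "sorted (x # ns)" using IH by simp
    have e1: "filter (\<lambda>x. x \<noteq> 0 \<and> x \<noteq> - int k) (x # p) = x # ns" using A unfolding ns_def P_def by simp
    have e2: "count_list (x # p) 0 = z" "count_list (x # p) (- int k) = f" using A unfolding z_def f_def by auto
    have c: "x # p = canR k D r (x # ns) z f" using IH by (simp add: canR_def)
    show ?thesis unfolding e1 e2 using c IH so by blast
  next
    case B
    have s: "sorted (2 * D ! r # fillR k D (Suc r) p)" using Cons.prems(5) B by simp
    have IH: "p = canR k D (Suc r) ns z f \<and> sorted ns \<and> blkinc D (Suc r) z"
      using Cons.IH[of "Suc r"] Cons.prems B unfolding ns_def z_def f_def P_def by simp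
    define a where "a = slot D (Suc r) z"
    have az: "a \<le> z" using slot_le a_def by simp
    have FL: "fillR k D (Suc r) p = ns @ map (\<lambda>i. 2 * D ! i) [Suc r..<Suc r + a]
     @ replicate f (2 * int (Suc r + a) + 1) @ map (\<lambda>i. 2 * D ! i) [Suc r + a..<Suc r + z]"
      using IH fillR_canR[OF k1 nsP] unfolding a_def by metis
    have ge: "2 * D ! r \<le> y" if "y \<in> set (fillR k D (Suc r) p)" for y using s that by auto
    have cz: "count_list (x # p) 0 = Suc z" using B unfolding z_def by simp
    have Dr: "0 < D ! r" "D ! r \<noteq> int (Suc r)" using Cons.prems(2) cz by auto
    have ns0: "ns = []"
    proof (rule ccontr)
      assume "ns \<noteq> []"
      then obtain y where "y \<in> set ns" by (meson list.set_sel(1))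
      then have "2 * D ! r \<le> y" "y < 0" using ge nsneg unfolding FL by auto
      then show False using Dr by simp
    qed
    have lt: "D ! r < D ! Suc r" if "z > 0"
    proof -
      have "2 * D ! Suc r \<in> set (fillR k D (Suc r) p)"
      proof (cases "a > 0")
        case True
        then have "Suc r \<in> set [Suc r..<Suc r + a]" by auto
        then have "2 * D ! Suc r \<in> set (map (\<lambda>i. 2 * D ! i) [Suc r..<Suc r + a])"
          by (simp only: set_map) (rule imageI)
        then show ?thesis unfolding FL by (simp only: set_append Un_iff) blast
      next
        case False
        then have "Suc r \<in> set [Suc r + a..<Suc r + z]" using that by auto
        then have "2 * D ! Suc r \<in> set (map (\<lambda>i. 2 * D ! i) [Suc r + a..<Suc r + z])"
          by (simp only: set_map) (rule imageI)
        then show ?thesis unfolding FL by (simp only: set_append Un_iff) blast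
      qed
      then have "D ! r \<le> D ! Suc r" using ge by fastforce
      moreover have "D ! r \<noteq> D ! Suc r"
        using Cons.prems(3,4) cz that by (simp add: nth_eq_iff_index_eq)
      ultimately show ?thesis by simp
    qed
    have blk: "blkinc D r (Suc z)" using blkinc_Suc IH lt by blast
    have FTs: "\<forall>i. Suc r \<le> i \<longrightarrow> i < Suc r + z \<longrightarrow> (D ! i < int (Suc i) \<longleftrightarrow> i < Suc r + a)"
      using FT_prefix[of D "Suc r" z] IH Cons.prems(2) cz unfolding a_def by auto
    have canon: "x # p = canR k D r [] (Suc z) f"
    proof (cases "f = 0")
      case True
      have "x # p = replicate (Suc z) 0"
        using IH ns0 True B az unfolding canR_def a_def[symmetric]
        by (simp add: replicate_add[symmetric])
      moreover have "canR k D r [] (Suc z) f = replicate (Suc z) 0"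
        using True slot_le[of D r "Suc z"] unfolding canR_def by (simp add: replicate_add[symmetric])
      ultimately show ?thesis by simp
    next
      case False
      have "2 * int (Suc r + a) + 1 \<in> set (fillR k D (Suc r) p)" unfolding FL using False by auto
      then have le: "D ! r \<le> int (Suc r + a)" using ge by fastforce
      have F: "D ! r < int (Suc r)"
      proof (cases "a = 0")
        case True then show ?thesis using le Dr by simp
      next
        case False
        then have "D ! Suc r < int (Suc (Suc r))" using FTs az by auto
        moreover have "D ! r < D ! Suc r" using lt False az by simp
        ultimately show ?thesis by simp
      qed
      then have sl: "slot D r (Suc z) = Suc a" using slot_Suc_left[of D r z] unfolding a_def by simp
      show ?thesis using IH ns0 B sl unfolding canR_def a_def[symmetric] by simp
    qed
    have e1: "filter (\<lambda>x. x \<noteq> 0 \<and> x \<noteq> - int k) (x # p) = []" using B ns0 unfolding ns_def P_def by simp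
    have e2: "count_list (x # p) (- int k) = f" using B k0 unfolding f_def by simp
    show ?thesis unfolding e1 e2 cz using canon blk by simp
  next
    case C
    have s: "sorted ((2 * int r + 1) # fillR k D r p)" using Cons.prems(5) C k0 by simp
    have IH: "p = canR k D r ns z f \<and> sorted ns \<and> blkinc D r z"
      using Cons.IH[of r] Cons.prems C k0 unfolding ns_def z_def f_def P_def by simp
    define a where "a = slot D r z"
    have az: "a \<le> z" using slot_le a_def by simp
    have FL: "fillR k D r p = ns @ map (\<lambda>i. 2 * D ! i) [r..<r + a]
     @ replicate f (2 * int (r + a) + 1) @ map (\<lambda>i. 2 * D ! i) [r + a..<r + z]"
      using IH fillR_canR[OF k1 nsP] unfolding a_def by metis
    have ge: "2 * int r + 1 \<le> y" if "y \<in> set (fillR k D r p)" for y using s that by auto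
    have cz: "count_list (x # p) 0 = z" using C k0 unfolding z_def by simp
    have ns0: "ns = []"
    proof (rule ccontr)
      assume "ns \<noteq> []"
      then obtain y where "y \<in> set ns" by (meson list.set_sel(1))
      then have "2 * int r + 1 \<le> y" "y < 0" using ge nsneg unfolding FL by auto
      then show False by simp
    qed
    have a0: "a = 0"
    proof (rule ccontr)
      assume "a \<noteq> 0"
      then have "2 * D ! r \<in> set (fillR k D r p)" unfolding FL by auto
      then have "2 * int r + 1 \<le> 2 * D ! r" using ge by blast
      moreover have "D ! r < int (Suc r)"
        using FT_prefix[of D r z] IH Cons.prems(2) cz \<open>a \<noteq> 0\<close> az unfolding a_def by auto
      ultimately show False by simp
    qed
    have canon: "x # p = canR k D r [] z (Suc f)"
      using IH ns0 C a0 unfolding canR_def a_def[symmetric] by simp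
    have e1: "filter (\<lambda>x. x \<noteq> 0 \<and> x \<noteq> - int k) (x # p) = []" using C ns0 unfolding ns_def P_def by simp
    have e2: "count_list (x # p) (- int k) = Suc f" using C unfolding f_def by simp
    show ?thesis unfolding e1 e2 cz using canon IH by simp
  qed
qed


definition relab :: "(nat \<Rightarrow> nat) \<Rightarrow> int \<Rightarrow> int" where
  "relab \<sigma> x = - int (\<sigma> (nat (- x)))"

lemma relab_range:
  assumes "\<sigma> permutes {1..k}" "- int k \<le> x" "x \<le> 0"
  shows "- int k \<le> relab \<sigma> x \<and> relab \<sigma> x \<le> 0 \<and> (relab \<sigma> x = 0 \<longleftrightarrow> x = 0)"
proof (cases "x = 0")
  case True
  have "\<sigma> 0 = 0" using assms(1) by (simp add: permutes_not_in)
  then show ?thesis using True unfolding relab_def by simp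
next
  case False
  then have "nat (- x) \<in> {1..k}" using assms by auto
  then have "\<sigma> (nat (- x)) \<in> {1..k}" using permutes_in_image[OF assms(1)] by blast
  then show ?thesis using False unfolding relab_def by auto
qed

lemma relab_inv:
  assumes "\<And>y. \<rho> (\<sigma> y) = y" "x \<le> 0"
  shows "relab \<rho> (relab \<sigma> x) = x"
  using assms unfolding relab_def by simp

lemma count_list_map_inj:
  "inj_on g (insert y (set w)) \<Longrightarrow> count_list (map g w) (g y) = count_list w y"
  by (induction w) (auto simp: inj_on_def)

definition inR :: "nat \<Rightarrow> int \<Rightarrow> bool" where
  "inR k x = (- int k \<le> x \<and> x \<le> 0)"

definition TL2R :: "nat \<Rightarrow> int list \<Rightarrow> (nat \<Rightarrow> nat) \<Rightarrow> nat \<Rightarrow> int list \<Rightarrow> int list" where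
  "TL2R k D \<sigma> r p = canR k D r (sort (filter (\<lambda>x. x \<noteq> 0 \<and> x \<noteq> - int k) (map (relab \<sigma>) p)))
      (count_list p 0) (count_list (map (relab \<sigma>) p) (- int k))"

definition TR2L :: "(nat \<Rightarrow> nat) \<Rightarrow> int list \<Rightarrow> int list" where
  "TR2L \<rho> p = sort (filter (\<lambda>x. x \<noteq> 0) (map (relab \<rho>) p)) @ replicate (count_list p 0) 0"

lemma rep_mset_add: "replicate_mset (a + b) x = replicate_mset a x + replicate_mset b x"
  by (induction a) auto

lemma mset_canR:
  "mset (canR k D r ns z f) = mset ns + replicate_mset z 0 + replicate_mset f (- int k)"
proof -
  have "slot D r z \<le> z" by (rule slot_le)
  then have "replicate_mset (slot D r z) (0::int) + replicate_mset (z - slot D r z) 0 = replicate_mset z 0"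
    by (metis le_add_diff_inverse rep_mset_add)
  then show ?thesis unfolding canR_def by (simp add: ac_simps)
qed

lemma mset_split3:
  assumes "(a::int) \<noteq> b"
  shows "M = filter_mset (\<lambda>x. x \<noteq> a \<and> x \<noteq> b) M + replicate_mset (count M a) a + replicate_mset (count M b) b"
proof -
  have e1: "filter_mset (\<lambda>x. \<not> (x \<noteq> a \<and> x \<noteq> b)) M = replicate_mset (count M a) a + replicate_mset (count M b) b"
  proof -
    have "filter_mset (\<lambda>x. \<not> (x \<noteq> a \<and> x \<noteq> b)) M = filter_mset (\<lambda>x. x = a) M + filter_mset (\<lambda>x. x = b) M"
      using assms by (induction M) auto
    then show ?thesis by (simp only: filter_eq_replicate_mset)
  qed
  have "M = filter_mset (\<lambda>x. x \<noteq> a \<and> x \<noteq> b) M + filter_mset (\<lambda>x. \<not> (x \<noteq> a \<and> x \<noteq> b)) M"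
    by (rule multiset_partition)
  also have "\<dots> = filter_mset (\<lambda>x. x \<noteq> a \<and> x \<noteq> b) M + (replicate_mset (count M a) a + replicate_mset (count M b) b)"
    by (simp only: e1)
  finally show ?thesis by (simp only: add.assoc)
qed

lemma mset_split1:
  "M = filter_mset (\<lambda>x. x \<noteq> (a::int)) M + replicate_mset (count M a) a"
proof -
  have "M = filter_mset (\<lambda>x. x \<noteq> a) M + filter_mset (\<lambda>x. \<not> x \<noteq> a) M"
    by (rule multiset_partition)
  then show ?thesis by (simp add: filter_eq_replicate_mset)
qed

context
  fixes k :: nat and D :: "int list" and \<sigma> \<rho> :: "nat \<Rightarrow> nat"
  assumes k1: "1 \<le> k" and ps: "\<sigma> permutes {1..k}" and pr: "\<rho> permutes {1..k}"
    and rs: "\<And>y. \<rho> (\<sigma> y) = y" and sr: "\<And>y. \<sigma> (\<rho> y) = y"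
    and gD: "goodD D"
begin

lemma Dprops: "\<And>i. i < length D \<Longrightarrow> 0 < D ! i \<and> D ! i \<noteq> int (Suc i)" "distinct D"
  using gD unfolding goodD_def by auto

lemma mset_map_relab_zero:
  assumes "\<forall>x\<in>set p. inR k x" "\<tau> permutes {1..k}"
  shows "count_list (map (relab \<tau>) p) 0 = count_list p 0"
  using assms
proof (induction p)
  case Nil then show ?case by simp
next
  case (Cons x p)
  then have "relab \<tau> x = 0 \<longleftrightarrow> x = 0" using relab_range[OF assms(2)] unfolding inR_def by auto
  then show ?case using Cons by simp
qed

lemma blk_from_sorted:
  assumes "sorted (map (\<lambda>i. D ! i) [r..<r+z])" "r + z \<le> length D"
  shows "blkinc D r z"
  unfolding blkinc_def
proof (intro allI impI)
  fix i assume i: "r \<le> i" "Suc i < r + z"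
  have "(map (\<lambda>i. D ! i) [r..<r+z]) ! (i - r) \<le> (map (\<lambda>i. D ! i) [r..<r+z]) ! (Suc i - r)"
    using assms(1) i by (intro sorted_nth_mono) auto
  then have "D ! i \<le> D ! Suc i" using i by (simp add: nth_map_upt)
  moreover have "D ! i \<noteq> D ! Suc i" using Dprops(2) i assms(2) by (simp add: nth_eq_iff_index_eq)
  ultimately show "D ! i < D ! Suc i" by simp
qed

lemma piece_L:
  assumes rng: "\<forall>x\<in>set p. inR k x" and len: "r + count_list p 0 \<le> length D"
    and srt: "sorted (fillL D r p)"
  shows "mset (TL2R k D \<sigma> r p) = mset (map (relab \<sigma>) p)"
    and "sorted (fillR k D r (TL2R k D \<sigma> r p))"
    and "TR2L \<rho> (TL2R k D \<sigma> r p) = p"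
proof -
  define M where "M = mset (map (relab \<sigma>) p)"
  define ns where "ns = sort (filter (\<lambda>x. x \<noteq> 0 \<and> x \<noteq> - int k) (map (relab \<sigma>) p))"
  define z where "z = count_list p 0"
  have k0: "(0::int) \<noteq> - int k" using k1 by simp
  have cz: "count M 0 = z" unfolding M_def z_def using mset_map_relab_zero[OF rng ps] by (metis count_mset)
  have T: "TL2R k D \<sigma> r p = canR k D r ns z (count M (- int k))"
    unfolding TL2R_def ns_def z_def M_def count_mset by (rule refl)
  have mns: "mset ns = filter_mset (\<lambda>x. x \<noteq> 0 \<and> x \<noteq> - int k) M" unfolding ns_def M_def by simp
  show m1: "mset (TL2R k D \<sigma> r p) = mset (map (relab \<sigma>) p)"
    unfolding T mset_canR mns using mset_split3[OF k0, of M] cz M_def by simp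
  have Dp: "\<forall>i<r + z. 0 < D ! i" using Dprops(1) len z_def by auto
  have PL: "p = filter (\<lambda>x. x \<noteq> 0) p @ replicate z 0 \<and> sorted (filter (\<lambda>x. x \<noteq> 0) p)
     \<and> sorted (map (\<lambda>i. D ! i) [r..<r + z])"
    using PL_dir[of p r D] rng srt Dp unfolding inR_def z_def by auto
  have blk: "blkinc D r z" using blk_from_sorted PL len z_def by simp
  have nsr: "\<forall>x\<in>set ns. - int k < x \<and> x < 0"
  proof
    fix x assume "x \<in> set ns"
    then obtain y where y: "y \<in> set p" "x = relab \<sigma> y" "x \<noteq> 0" "x \<noteq> - int k" unfolding ns_def by auto
    then show "- int k < x \<and> x < 0" using relab_range[OF ps, of y] rng unfolding inR_def by fastforce
  qed
  show "sorted (fillR k D r (TL2R k D \<sigma> r p))"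
    unfolding T by (rule PR_conv[OF k1]) (use nsr blk Dprops(1) len z_def in \<open>auto simp: ns_def\<close>)
  define q where "q = TL2R k D \<sigma> r p"
  have "mset (map (relab \<rho>) q) = image_mset (relab \<rho>) (image_mset (relab \<sigma>) (mset p))"
    using m1 unfolding q_def by simp
  also have "\<dots> = mset p"
  proof -
    have "image_mset (relab \<rho>) (image_mset (relab \<sigma>) (mset p)) = image_mset (\<lambda>x. x) (mset p)"
      unfolding image_mset.compositionality
      by (rule image_mset_cong) (use rng relab_inv[where \<rho>=\<rho> and \<sigma>=\<sigma>, OF rs] in \<open>auto simp: inR_def\<close>)
    then show ?thesis by simp
  qed
  finally have mq: "mset (map (relab \<rho>) q) = mset p" .
  have "sort (filter (\<lambda>x. x \<noteq> 0) (map (relab \<rho>) q)) = filter (\<lambda>x. x \<noteq> 0) p"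
    by (rule properties_for_sort) (use mq PL in auto)
  moreover have "count_list q 0 = z" using m1 cz unfolding q_def M_def by (metis count_mset)
  ultimately show "TR2L \<rho> (TL2R k D \<sigma> r p) = p" unfolding TR2L_def q_def[symmetric] using PL by simp
qed

lemma piece_R:
  assumes rng: "\<forall>x\<in>set p. inR k x" and len: "r + count_list p 0 \<le> length D"
    and srt: "sorted (fillR k D r p)"
  shows "mset (TR2L \<rho> p) = mset (map (relab \<rho>) p)"
    and "sorted (fillL D r (TR2L \<rho> p))"
    and "TL2R k D \<sigma> r (TR2L \<rho> p) = p"
proof -
  define M where "M = mset (map (relab \<rho>) p)"
  define z where "z = count_list p 0"
  have cz: "count M 0 = z" unfolding M_def z_def using mset_map_relab_zero[OF rng pr] by (metis count_mset)
  show m1: "mset (TR2L \<rho> p) = mset (map (relab \<rho>) p)"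
    unfolding TR2L_def using mset_split1[of M 0] cz unfolding M_def z_def by simp
  have Dp: "\<forall>i<r + z. 0 < D ! i \<and> D ! i \<noteq> int (Suc i)" using Dprops(1) len z_def by auto
  have PR: "p = canR k D r (filter (\<lambda>x. x \<noteq> 0 \<and> x \<noteq> - int k) p) z (count_list p (- int k))
    \<and> sorted (filter (\<lambda>x. x \<noteq> 0 \<and> x \<noteq> - int k) p) \<and> blkinc D r z"
    using PR_dir[OF k1, of p r D] rng Dp len srt Dprops(2) unfolding inR_def z_def by auto
  have nsr: "\<forall>x\<in>set (sort (filter (\<lambda>x. x \<noteq> 0) (map (relab \<rho>) p))). x < 0"
  proof
    fix x assume "x \<in> set (sort (filter (\<lambda>x. x \<noteq> 0) (map (relab \<rho>) p)))"
    then obtain y where y: "y \<in> set p" "x = relab \<rho> y" "x \<noteq> 0" by auto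
    then show "x < 0" using relab_range[OF pr, of y] rng unfolding inR_def by fastforce
  qed
  show "sorted (fillL D r (TR2L \<rho> p))"
    unfolding TR2L_def by (rule PL_conv) (use nsr blkinc_sorted PR Dp z_def in auto)
  define q where "q = TR2L \<rho> p"
  have "mset (map (relab \<sigma>) q) = image_mset (relab \<sigma>) (image_mset (relab \<rho>) (mset p))"
    using m1 unfolding q_def by simp
  also have "\<dots> = mset p"
  proof -
    have "image_mset (relab \<sigma>) (image_mset (relab \<rho>) (mset p)) = image_mset (\<lambda>x. x) (mset p)"
      unfolding image_mset.compositionality
      by (rule image_mset_cong) (use rng relab_inv[where \<rho>=\<sigma> and \<sigma>=\<rho>, OF sr] in \<open>auto simp: inR_def\<close>)
    then show ?thesis by simp
  qed
  finally have mq: "mset (map (relab \<sigma>) q) = mset p" .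
  have "sort (filter (\<lambda>x. x \<noteq> 0 \<and> x \<noteq> - int k) (map (relab \<sigma>) q)) = filter (\<lambda>x. x \<noteq> 0 \<and> x \<noteq> - int k) p"
    by (rule properties_for_sort) (use mq PR in auto)
  moreover have "count_list q 0 = z" using m1 cz unfolding q_def M_def by (metis count_mset)
  moreover have "count_list (map (relab \<sigma>) q) (- int k) = count_list p (- int k)"
    using mq by (metis count_mset)
  ultimately show "TL2R k D \<sigma> r (TR2L \<rho> p) = p" unfolding TL2R_def q_def[symmetric] using PR by simp
qed

end


fun PsiL :: "nat \<Rightarrow> int list \<Rightarrow> (nat \<Rightarrow> nat) \<Rightarrow> nat \<Rightarrow> nat list \<Rightarrow> int list \<Rightarrow> int list" where
  "PsiL k D \<sigma> r [] w = []"
| "PsiL k D \<sigma> r (l # Ls) w = TL2R k D \<sigma> r (take l w) @ PsiL k D \<sigma> (r + count_list (take l w) 0) Ls (drop l w)"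

fun PsiR :: "(nat \<Rightarrow> nat) \<Rightarrow> nat list \<Rightarrow> int list \<Rightarrow> int list" where
  "PsiR \<rho> [] w = []"
| "PsiR \<rho> (l # Ls) w = TR2L \<rho> (take l w) @ PsiR \<rho> Ls (drop l w)"

definition Wset :: "nat \<Rightarrow> nat \<Rightarrow> int list \<Rightarrow> (nat \<Rightarrow> nat) \<Rightarrow> int list set" where
  "Wset n k D m = {w. length w = n \<and> (\<forall>x\<in>set w. inR k x) \<and> count_list w 0 = length D
     \<and> (\<forall>i\<in>{1..k}. count_list w (- int i) = m i)}"

lemma Wset_finite: "finite (Wset n k D m)"
proof -
  have "Wset n k D m \<subseteq> {xs. set xs \<subseteq> {- int k..0} \<and> length xs = n}"
    unfolding Wset_def inR_def by auto
  moreover have "finite {xs. set xs \<subseteq> {- int k..0} \<and> length xs = n}"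
    by (rule finite_lists_length_eq) simp
  ultimately show ?thesis using finite_subset by blast
qed

context
  fixes k :: nat and D :: "int list" and \<sigma> \<rho> :: "nat \<Rightarrow> nat"
  assumes k1: "1 \<le> k" and ps: "\<sigma> permutes {1..k}" and pr: "\<rho> permutes {1..k}"
    and rs: "\<And>y. \<rho> (\<sigma> y) = y" and sr: "\<And>y. \<sigma> (\<rho> y) = y"
    and gD: "goodD D"
begin

lemmas pL = piece_L[OF k1 ps pr rs sr gD]
lemmas pR = piece_R[OF k1 ps pr rs sr gD]

lemma glob_L:
  "length w = sum_list Ls \<Longrightarrow> \<forall>x\<in>set w. inR k x \<Longrightarrow> r + count_list w 0 \<le> length D \<Longrightarrow>
   pieces_ok (fillL D) r Ls w \<Longrightarrow>
   mset (PsiL k D \<sigma> r Ls w) = mset (map (relab \<sigma>) w) \<and> pieces_ok (fillR k D) r Ls (PsiL k D \<sigma> r Ls w)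
   \<and> PsiR \<rho> Ls (PsiL k D \<sigma> r Ls w) = w"
proof (induction Ls arbitrary: r w)
  case Nil then show ?case by simp
next
  case (Cons l Ls)
  define p where "p = take l w"
  define w' where "w' = drop l w"
  define q where "q = TL2R k D \<sigma> r p"
  have w: "w = p @ w'" unfolding p_def w'_def by simp
  have ll: "length p = l" using Cons.prems(1) unfolding p_def by simp
  have cw: "count_list w 0 = count_list p 0 + count_list w' 0" unfolding w by simp
  have rngp: "\<forall>x\<in>set p. inR k x" using Cons.prems(2) unfolding w by simp
  have rngw': "\<forall>x\<in>set w'. inR k x" using Cons.prems(2) unfolding w by simp
  have lenp: "r + count_list p 0 \<le> length D" using Cons.prems(3) cw by simp
  have srt: "sorted (fillL D r p)" using Cons.prems(4) unfolding p_def by simp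
  have q1: "mset q = mset (map (relab \<sigma>) p)" using pL(1)[OF rngp lenp srt] unfolding q_def .
  have q2: "sorted (fillR k D r q)" using pL(2)[OF rngp lenp srt] unfolding q_def .
  have q3: "TR2L \<rho> q = p" using pL(3)[OF rngp lenp srt] unfolding q_def .
  have lq: "length q = l" using q1 ll by (metis length_map size_mset)
  have cq: "count_list q 0 = count_list p 0"
    using q1 mset_map_relab_zero[OF k1 ps pr rs sr gD rngp ps] by (metis count_mset)
  have IH: "mset (PsiL k D \<sigma> (r + count_list p 0) Ls w') = mset (map (relab \<sigma>) w')
     \<and> pieces_ok (fillR k D) (r + count_list p 0) Ls (PsiL k D \<sigma> (r + count_list p 0) Ls w')
     \<and> PsiR \<rho> Ls (PsiL k D \<sigma> (r + count_list p 0) Ls w') = w'"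
    using Cons.IH[of w' "r + count_list p 0"] Cons.prems cw rngw' by (simp add: w'_def p_def)
  have P: "PsiL k D \<sigma> r (l # Ls) w = q @ PsiL k D \<sigma> (r + count_list p 0) Ls w'"
    unfolding q_def p_def w'_def by simp
  show ?case unfolding P using IH lq q1 q2 q3 cq w by simp
qed

lemma glob_R:
  "length w = sum_list Ls \<Longrightarrow> \<forall>x\<in>set w. inR k x \<Longrightarrow> r + count_list w 0 \<le> length D \<Longrightarrow>
   pieces_ok (fillR k D) r Ls w \<Longrightarrow>
   mset (PsiR \<rho> Ls w) = mset (map (relab \<rho>) w) \<and> pieces_ok (fillL D) r Ls (PsiR \<rho> Ls w)
   \<and> PsiL k D \<sigma> r Ls (PsiR \<rho> Ls w) = w"
proof (induction Ls arbitrary: r w)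
  case Nil then show ?case by simp
next
  case (Cons l Ls)
  define p where "p = take l w"
  define w' where "w' = drop l w"
  define q where "q = TR2L \<rho> p"
  have w: "w = p @ w'" unfolding p_def w'_def by simp
  have ll: "length p = l" using Cons.prems(1) unfolding p_def by simp
  have cw: "count_list w 0 = count_list p 0 + count_list w' 0" unfolding w by simp
  have rngp: "\<forall>x\<in>set p. inR k x" using Cons.prems(2) unfolding w by simp
  have rngw': "\<forall>x\<in>set w'. inR k x" using Cons.prems(2) unfolding w by simp
  have lenp: "r + count_list p 0 \<le> length D" using Cons.prems(3) cw by simp
  have srt: "sorted (fillR k D r p)" using Cons.prems(4) unfolding p_def by simp
  have q1: "mset q = mset (map (relab \<rho>) p)" using pR(1)[OF rngp lenp srt] unfolding q_def .
  have q2: "sorted (fillL D r q)" using pR(2)[OF rngp lenp srt] unfolding q_def .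
  have q3: "TL2R k D \<sigma> r q = p" using pR(3)[OF rngp lenp srt] unfolding q_def .
  have lq: "length q = l" using q1 ll by (metis length_map size_mset)
  have cq: "count_list q 0 = count_list p 0"
    using q1 mset_map_relab_zero[OF k1 ps pr rs sr gD rngp pr] by (metis count_mset)
  have IH: "mset (PsiR \<rho> Ls w') = mset (map (relab \<rho>) w')
     \<and> pieces_ok (fillL D) (r + count_list p 0) Ls (PsiR \<rho> Ls w')
     \<and> PsiL k D \<sigma> (r + count_list p 0) Ls (PsiR \<rho> Ls w') = w'"
    using Cons.IH[of w' "r + count_list p 0"] Cons.prems cw rngw' by (simp add: w'_def p_def)
  have P: "PsiR \<rho> (l # Ls) w = q @ PsiR \<rho> Ls w'"
    unfolding q_def p_def w'_def by simp
  show ?case unfolding P using IH lq q1 q2 q3 cq w by simp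
qed

end


context
  fixes k :: nat and D :: "int list" and \<sigma> \<rho> :: "nat \<Rightarrow> nat"
  assumes k1: "1 \<le> k" and ps: "\<sigma> permutes {1..k}" and pr: "\<rho> permutes {1..k}"
    and rs: "\<And>y. \<rho> (\<sigma> y) = y" and sr: "\<And>y. \<sigma> (\<rho> y) = y"
    and gD: "goodD D"
begin

lemma relab_count:
  assumes rng: "\<forall>x\<in>set w. inR k x" and i: "i \<in> {1..k}"
    and ab: "\<alpha> permutes {1..k}" "\<beta> permutes {1..k}" "\<And>y. \<beta> (\<alpha> y) = y" "\<And>y. \<alpha> (\<beta> y) = y"
  shows "count_list (map (relab \<alpha>) w) (- int i) = count_list w (- int (\<beta> i))"
proof -
  have bi: "\<beta> i \<in> {1..k}" using i permutes_in_image[OF ab(2)] by blast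
  have "relab \<alpha> (- int (\<beta> i)) = - int i" unfolding relab_def using ab(4) by simp
  moreover have "inj_on (relab \<alpha>) (insert (- int (\<beta> i)) (set w))"
  proof (rule inj_on_inverseI)
    fix x assume "x \<in> insert (- int (\<beta> i)) (set w)"
    then have "x \<le> 0" using rng unfolding inR_def by auto
    then show "relab \<beta> (relab \<alpha> x) = x" by (rule relab_inv[where \<rho>=\<beta> and \<sigma>=\<alpha>, OF ab(3)])
  qed
  ultimately show ?thesis using count_list_map_inj by metis
qed

lemma relab_zero_count:
  assumes rng: "\<forall>x\<in>set w. inR k x" and ab: "\<alpha> permutes {1..k}"
  shows "count_list (map (relab \<alpha>) w) 0 = count_list w 0"
  using rng
proof (induction w)
  case Nil then show ?case by simp
next
  case (Cons x w)
  then have "relab \<alpha> x = 0 \<longleftrightarrow> x = 0" using relab_range[OF ab] unfolding inR_def by auto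
  then show ?case using Cons by simp
qed

lemma relab_rng:
  assumes rng: "\<forall>x\<in>set w. inR k x" and ab: "\<alpha> permutes {1..k}"
  shows "\<forall>x\<in>set (map (relab \<alpha>) w). inR k x"
  using rng relab_range[OF ab] unfolding inR_def by auto

lemma core_sub:
  assumes Lpos: "\<forall>l\<in>set Ls. 0 < l" and Lsum: "sum_list Ls = n"
  shows "card {w\<in>Wset n k D m. pieces_ok (fillL D) 0 Ls w}
       = card {w\<in>Wset n k D (\<lambda>i. m (\<rho> i)). pieces_ok (fillR k D) 0 Ls w}"
proof -
  define A where "A = {w\<in>Wset n k D m. pieces_ok (fillL D) 0 Ls w}"
  define B where "B = {w\<in>Wset n k D (\<lambda>i. m (\<rho> i)). pieces_ok (fillR k D) 0 Ls w}"
  have gL: "mset (PsiL k D \<sigma> 0 Ls w) = mset (map (relab \<sigma>) w) \<and> pieces_ok (fillR k D) 0 Ls (PsiL k D \<sigma> 0 Ls w)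
     \<and> PsiR \<rho> Ls (PsiL k D \<sigma> 0 Ls w) = w" if "w \<in> A" for w
    using glob_L[OF k1 ps pr rs sr gD, of w Ls 0] that Lsum unfolding A_def Wset_def by auto
  have gR: "mset (PsiR \<rho> Ls w) = mset (map (relab \<rho>) w) \<and> pieces_ok (fillL D) 0 Ls (PsiR \<rho> Ls w)
     \<and> PsiL k D \<sigma> 0 Ls (PsiR \<rho> Ls w) = w" if "w \<in> B" for w
    using glob_R[OF k1 ps pr rs sr gD, of w Ls 0] that Lsum unfolding B_def Wset_def by auto
  have "bij_betw (PsiL k D \<sigma> 0 Ls) A B"
  proof (rule bij_betw_byWitness[where f'="PsiR \<rho> Ls"])
    show "\<forall>a\<in>A. PsiR \<rho> Ls (PsiL k D \<sigma> 0 Ls a) = a" using gL by blast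
    show "\<forall>a\<in>B. PsiL k D \<sigma> 0 Ls (PsiR \<rho> Ls a) = a" using gR by blast
    show "PsiL k D \<sigma> 0 Ls ` A \<subseteq> B"
    proof
      fix v assume "v \<in> PsiL k D \<sigma> 0 Ls ` A"
      then obtain w where w: "w \<in> A" "v = PsiL k D \<sigma> 0 Ls w" by blast
      have rng: "\<forall>x\<in>set w. inR k x" using w unfolding A_def Wset_def by auto
      have mv: "mset v = mset (map (relab \<sigma>) w)" using gL w by blast
      have "length v = n" using mv w unfolding A_def Wset_def by (metis (mono_tags, lifting) length_map mem_Collect_eq size_mset)
      moreover have "\<forall>x\<in>set v. inR k x" using relab_rng[OF rng ps] mv by (metis set_mset_mset)
      moreover have "count_list v 0 = length D"
        using relab_zero_count[OF rng ps] mv w unfolding A_def Wset_def by (metis (mono_tags, lifting) count_mset mem_Collect_eq)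
      moreover have "count_list v (- int i) = m (\<rho> i)" if "i \<in> {1..k}" for i
      proof -
        have "count_list v (- int i) = count_list (map (relab \<sigma>) w) (- int i)" using mv by (metis count_mset)
        also have "\<dots> = count_list w (- int (\<rho> i))" using relab_count[OF rng that ps pr rs sr] .
        also have "\<dots> = m (\<rho> i)"
        proof -
          have "\<rho> i \<in> {1..k}" using that permutes_in_image[OF pr] by blast
          then show ?thesis using w unfolding A_def Wset_def by blast
        qed
        finally show ?thesis .
      qed
      ultimately show "v \<in> B" using gL w unfolding B_def Wset_def by auto
    qed
    show "PsiR \<rho> Ls ` B \<subseteq> A"
    proof
      fix v assume "v \<in> PsiR \<rho> Ls ` B"
      then obtain w where w: "w \<in> B" "v = PsiR \<rho> Ls w" by blast
      have rng: "\<forall>x\<in>set w. inR k x" using w unfolding B_def Wset_def by auto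
      have mv: "mset v = mset (map (relab \<rho>) w)" using gR w by blast
      have "length v = n" using mv w unfolding B_def Wset_def by (metis (mono_tags, lifting) length_map mem_Collect_eq size_mset)
      moreover have "\<forall>x\<in>set v. inR k x" using relab_rng[OF rng pr] mv by (metis set_mset_mset)
      moreover have "count_list v 0 = length D"
        using relab_zero_count[OF rng pr] mv w unfolding B_def Wset_def by (metis (mono_tags, lifting) count_mset mem_Collect_eq)
      moreover have "count_list v (- int i) = m i" if "i \<in> {1..k}" for i
      proof -
        have "count_list v (- int i) = count_list (map (relab \<rho>) w) (- int i)" using mv by (metis count_mset)
        also have "\<dots> = count_list w (- int (\<sigma> i))" using relab_count[OF rng that pr ps sr rs] .
        also have "\<dots> = m (\<rho> (\<sigma> i))"
        proof -
          have "\<sigma> i \<in> {1..k}" using that permutes_in_image[OF ps] by blast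
          then show ?thesis using w unfolding B_def Wset_def by blast
        qed
        finally show ?thesis using rs by simp
      qed
      ultimately show "v \<in> A" using gR w unfolding A_def Wset_def by auto
    qed
  qed
  then show ?thesis unfolding A_def B_def by (rule bij_betw_same_card)
qed

lemma core_eq:
  assumes n1: "1 \<le> n"
  shows "card {w\<in>Wset n k D m. DES_word (fillL D 0 w) = S}
       = card {w\<in>Wset n k D (\<lambda>i. m (\<rho> i)). DES_word (fillR k D 0 w) = S}"
proof (rule incl_excl_card)
  show "finite (Wset n k D m)" "finite (Wset n k D (\<lambda>i. m (\<rho> i)))" by (rule Wset_finite)+
  show "finite (DES_word (fillL D 0 w))" "finite (DES_word (fillR k D 0 w))" for w
    by (rule DES_word_finite)+
  fix S
  define S0 where "S0 = S \<inter> {1..<n}"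
  obtain Ls where L: "\<forall>l\<in>set Ls. 0 < l" "sum_list Ls = n" "cuts Ls = insert n S0"
    using compositions_exist[OF n1, of S0] unfolding S0_def by auto
  have key: "DES_word v \<subseteq> S \<longleftrightarrow> DES_word v \<subseteq> cuts Ls" if "length v = n" for v :: "int list"
  proof -
    have "DES_word v \<subseteq> {1..<n}" using DES_word_sub[of v] that by simp
    then show ?thesis unfolding L(3) S0_def by auto
  qed
  have eL: "{w\<in>Wset n k D m. DES_word (fillL D 0 w) \<subseteq> S} = {w\<in>Wset n k D m. pieces_ok (fillL D) 0 Ls w}"
  proof -
    have "DES_word (fillL D 0 w) \<subseteq> S \<longleftrightarrow> pieces_ok (fillL D) 0 Ls w" if "w \<in> Wset n k D m" for w
    proof -
      have lw: "length w = n" using that unfolding Wset_def by simp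
      have "DES_word (fillL D 0 w) \<subseteq> S \<longleftrightarrow> DES_word (fillL D 0 w) \<subseteq> cuts Ls" using key lw by simp
      also have "\<dots> \<longleftrightarrow> pieces_ok (fillL D) 0 Ls w"
        by (rule DES_pieces[of "fillL D"]) (use fillL_append L lw in auto)
      finally show ?thesis .
    qed
    then show ?thesis by blast
  qed
  have eR: "{w\<in>Wset n k D (\<lambda>i. m (\<rho> i)). DES_word (fillR k D 0 w) \<subseteq> S}
      = {w\<in>Wset n k D (\<lambda>i. m (\<rho> i)). pieces_ok (fillR k D) 0 Ls w}"
  proof -
    have "DES_word (fillR k D 0 w) \<subseteq> S \<longleftrightarrow> pieces_ok (fillR k D) 0 Ls w" if "w \<in> Wset n k D (\<lambda>i. m (\<rho> i))" for w
    proof -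
      have lw: "length w = n" using that unfolding Wset_def by simp
      have "DES_word (fillR k D 0 w) \<subseteq> S \<longleftrightarrow> DES_word (fillR k D 0 w) \<subseteq> cuts Ls" using key lw by simp
      also have "\<dots> \<longleftrightarrow> pieces_ok (fillR k D) 0 Ls w"
        by (rule DES_pieces[of "fillR k D"]) (use fillR_append L lw in auto)
      finally show ?thesis .
    qed
    then show ?thesis by blast
  qed
  show "card {w\<in>Wset n k D m. DES_word (fillL D 0 w) \<subseteq> S}
       = card {w\<in>Wset n k D (\<lambda>i. m (\<rho> i)). DES_word (fillR k D 0 w) \<subseteq> S}"
    unfolding eL eR by (rule core_sub[OF L(1,2)])
qed

end


lemma fillL_nth: "j < length w \<Longrightarrow>
  fillL D r w ! j = (if w ! j = 0 then D ! (r + count_list (take j w) 0) else w ! j)"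
proof (induction w arbitrary: j r)
  case Nil then show ?case by simp
next
  case (Cons x w)
  then show ?case by (cases j) auto
qed

lemma fillR_nth: "j < length w \<Longrightarrow>
  fillR k D r w ! j = (if w ! j = 0 then 2 * D ! (r + count_list (take j w) 0)
     else if w ! j = - int k then 2 * int (r + count_list (take j w) 0) + 1 else w ! j)"
proof (induction w arbitrary: j r)
  case Nil then show ?case by simp
next
  case (Cons x w)
  then show ?case by (cases j) auto
qed

definition zeroed :: "int list \<Rightarrow> int list" where
  "zeroed v = map (\<lambda>x. if 0 < x then 0 else x) v"

lemma fillL_zeroed_gen:
  "0 \<notin> set v \<Longrightarrow> fillL (Dp @ Pos v) (length Dp) (zeroed v) = v"
proof (induction v arbitrary: Dp)
  case Nil then show ?case by (simp add: zeroed_def)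
next
  case (Cons x v)
  show ?case
  proof (cases "0 < x")
    case True
    have "fillL ((Dp @ [x]) @ Pos v) (length (Dp @ [x])) (zeroed v) = v"
      using Cons.IH[of "Dp @ [x]"] Cons.prems by simp
    then have "fillL (Dp @ x # Pos v) (Suc (length Dp)) (zeroed v) = v" by simp
    then show ?thesis using True by (simp add: zeroed_def Pos_def nth_append)
  next
    case False
    then have "x < 0" using Cons.prems by auto
    then show ?thesis using Cons by (simp add: zeroed_def Pos_def)
  qed
qed

lemma fillL_zeroed: "0 \<notin> set v \<Longrightarrow> fillL (Pos v) 0 (zeroed v) = v"
  using fillL_zeroed_gen[of v "[]"] by simp

lemma DES_word_map:
  assumes "\<And>x y. x \<in> set w \<Longrightarrow> y \<in> set w \<Longrightarrow> (h x > h y \<longleftrightarrow> x > y)"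
  shows "DES_word (map h w) = DES_word w"
  unfolding DES_word_def using assms by (auto simp: nth_map)

lemma red_pos_nth: "j < length w \<Longrightarrow>
  red_pos w ! j = (if 0 < w ! j then int (card {y \<in> set w. 0 < y \<and> y < w ! j}) + 1 else w ! j)"
  unfolding red_pos_def by simp

lemma DES_red_pos: "DES_word (red_pos w) = DES_word w"
  unfolding red_pos_def
proof (rule DES_word_map)
  fix x y assume xy: "x \<in> set w" "y \<in> set w"
  define h where "h x = int (card {z \<in> set w. 0 < z \<and> z < x})" for x
  have mono: "h a \<le> h b" if "a \<le> b" for a b
    unfolding h_def using that by (simp add: card_mono subset_iff)
  have smono: "h a < h b" if "a < b" "0 < a" "a \<in> set w" for a b
  proof -
    have "{z \<in> set w. 0 < z \<and> z < a} \<subset> {z \<in> set w. 0 < z \<and> z < b}" using that by auto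
    then show ?thesis unfolding h_def by (simp add: psubset_card_mono)
  qed
  show "(if 0 < x then int (card {y \<in> set w. 0 < y \<and> y < x}) + 1 else x) >
        (if 0 < y then int (card {z \<in> set w. 0 < z \<and> z < y}) + 1 else y) \<longleftrightarrow> x > y"
  proof (cases "0 < x"; cases "0 < y")
    assume "0 < x" "0 < y"
    then show ?thesis using mono[of x y] smono[of y x] xy unfolding h_def by force
  qed auto
qed

lemma count_list_map_upt:
  "count_list (map f [a..<b]) x = card {i\<in>{a..<b}. f i = x}"
proof -
  have "count_list (map f [a..<b]) x = length (filter (\<lambda>i. f i = x) [a..<b])"
    by (simp add: count_list_eq_length_filter filter_map comp_def eq_commute)
  also have "\<dots> = card ({i. f i = x} \<inter> set [a..<b])" by (simp add: distinct_length_filter)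
  also have "\<dots> = card {i\<in>{a..<b}. f i = x}" by (rule arg_cong[where f=card]) auto
  finally show ?thesis .
qed

definition rk :: "nat set \<Rightarrow> nat \<Rightarrow> nat" where
  "rk C x = card {y\<in>C. y < x}"

lemma rk_less:
  assumes "finite C" "x \<in> C" "x < y"
  shows "rk C x < rk C y"
proof -
  have "{z\<in>C. z < x} \<subset> {z\<in>C. z < y}" using assms by auto
  moreover have "finite {z\<in>C. z < y}" using assms by simp
  ultimately show ?thesis unfolding rk_def by (simp add: psubset_card_mono)
qed

lemma rk_mono: "finite C \<Longrightarrow> x \<le> y \<Longrightarrow> rk C x \<le> rk C y"
  unfolding rk_def by (intro card_mono) auto

lemma rk_less_iff:
  assumes "finite C" "x \<in> C" "y \<in> C"
  shows "rk C x < rk C y \<longleftrightarrow> x < y"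
  using rk_less[OF assms(1,2)] rk_less[OF assms(1,3)] by (metis linorder_neqE_nat not_less_iff_gr_or_eq)

lemma rk_inj: "finite C \<Longrightarrow> inj_on (rk C) C"
  by (rule inj_onI) (metis rk_less_iff linorder_neqE_nat less_irrefl)

lemma rk_bound: "finite C \<Longrightarrow> x \<in> C \<Longrightarrow> rk C x < card C"
  unfolding rk_def by (rule psubset_card_mono) auto

lemma rk_image: "finite C \<Longrightarrow> rk C ` C = {0..<card C}"
proof -
  assume f: "finite C"
  have "rk C ` C \<subseteq> {0..<card C}" using rk_bound[OF f] by auto
  moreover have "card (rk C ` C) = card {0..<card C}" using card_image[OF rk_inj[OF f]] by simp
  ultimately show ?thesis by (intro card_subset_eq) auto
qed

lemma rk_Suc: "finite C \<Longrightarrow> rk C (Suc x) = (if x \<in> C then Suc (rk C x) else rk C x)"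
proof -
  assume f: "finite C"
  have e: "{y\<in>C. y < Suc x} = {y\<in>C. y < x} \<union> ({x} \<inter> C)" by auto
  show ?thesis
  proof (cases "x \<in> C")
    case True
    then have "{y\<in>C. y < Suc x} = insert x {y\<in>C. y < x}" using e by auto
    then show ?thesis unfolding rk_def using True f by simp
  next
    case False
    then have "{y\<in>C. y < Suc x} = {y\<in>C. y < x}" using e by auto
    then show ?thesis unfolding rk_def using False by simp
  qed
qed


declare upt_Suc [simp del]

definition sig :: "nat \<Rightarrow> arrangement \<Rightarrow> int list" where
  "sig n a = map (snd a) [1..<n+1]"

definition Cset :: "nat \<Rightarrow> arrangement \<Rightarrow> nat set" where
  "Cset n a = {i\<in>{1..n}. snd a i = 0}"

context
  fixes n k :: nat and \<pi> :: "nat \<Rightarrow> nat" and \<phi> :: "nat \<Rightarrow> int"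
  assumes arr: "(\<pi>, \<phi>) \<in> arrangements n k"
begin

lemma perm: "\<pi> permutes {1..n}"
  using arr unfolding arrangements_def by simp

lemma phi_cases: "if i \<in> FIX n \<pi> then \<phi> i \<in> {- int k .. -1} else \<phi> i = 0"
proof -
  have "\<forall>i. if i \<in> FIX n \<pi> then \<phi> i \<in> {- int k .. -1} else \<phi> i = 0"
    using arr unfolding arrangements_def mem_Collect_eq case_prod_conv by blast
  then show ?thesis by (rule spec)
qed

lemma phi_nz_iff: "\<phi> i \<noteq> 0 \<longleftrightarrow> i \<in> FIX n \<pi>"
  using phi_cases[of i] by (auto split: if_splits)

lemma phi_out: "i \<notin> {1..n} \<Longrightarrow> \<phi> i = 0"
  using phi_nz_iff[of i] unfolding FIX_def by auto

lemma phi_range: "- int k \<le> \<phi> i \<and> \<phi> i \<le> 0"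
  using phi_cases[of i] by (auto split: if_splits)

lemma phi_nz_fix: "\<phi> i \<noteq> 0 \<Longrightarrow> \<pi> i = i \<and> i \<in> {1..n}"
  using phi_nz_iff[of i] unfolding FIX_def by auto

abbreviation "C \<equiv> Cset n (\<pi>, \<phi>)"

lemma C_def': "C = {i\<in>{1..n}. \<phi> i = 0}"
  unfolding Cset_def by simp

lemma C_fin: "finite C"
  unfolding C_def' by simp

lemma C_nfix: "t \<in> C \<Longrightarrow> \<pi> t \<noteq> t"
  using phi_nz_iff[of t] unfolding C_def' FIX_def by auto

lemma pi_C: "t \<in> C \<Longrightarrow> \<pi> t \<in> C"
proof -
  assume t: "t \<in> C"
  have "t \<in> {1..n}" using t unfolding C_def' by blast
  then have "\<pi> t \<in> {1..n}" using permutes_in_image[OF perm] by blast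
  moreover have "\<phi> (\<pi> t) = 0"
  proof (rule ccontr)
    assume "\<phi> (\<pi> t) \<noteq> 0"
    then have "\<pi> (\<pi> t) = \<pi> t" using phi_nz_fix by blast
    then have "\<pi> t = t" using permutes_inj[OF perm] by (simp add: inj_eq)
    then show False using C_nfix t by simp
  qed
  ultimately show "\<pi> t \<in> C" unfolding C_def' by simp
qed

lemma pi_img_C: "\<pi> ` C = C"
  by (rule endo_inj_surj[OF C_fin]) (use pi_C inj_on_subset[OF permutes_inj[OF perm]] in auto)

lemma raw_df_nth: "j < n \<Longrightarrow>
  map (\<lambda>i. if i \<in> FIX n \<pi> then \<phi> i else int (\<pi> i)) [1..<n+1] ! j
   = (if \<phi> (Suc j) \<noteq> 0 then \<phi> (Suc j) else int (\<pi> (Suc j)))"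
proof -
  assume j: "j < n"
  have "map (\<lambda>i. if i \<in> FIX n \<pi> then \<phi> i else int (\<pi> i)) [1..<n+1] ! j
     = (if Suc j \<in> FIX n \<pi> then \<phi> (Suc j) else int (\<pi> (Suc j)))"
    using j by (simp add: nth_map_upt)
  then show ?thesis using phi_nz_iff[of "Suc j"] by simp
qed

lemma pi_pos: "t \<in> {1..n} \<Longrightarrow> 1 \<le> \<pi> t \<and> \<pi> t \<le> n"
proof -
  assume "t \<in> {1..n}"
  then have "\<pi> t \<in> {1..n}" using permutes_in_image[OF perm] by blast
  then show ?thesis by simp
qed

lemma df_nth: "j < n \<Longrightarrow> df n k (\<pi>, \<phi>) ! j = (if \<phi> (Suc j) \<noteq> 0 then \<phi> (Suc j)
   else int (card {y \<in> set (map (\<lambda>i. if i \<in> FIX n \<pi> then \<phi> i else int (\<pi> i)) [1..<n+1]).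
                     0 < y \<and> y < int (\<pi> (Suc j))}) + 1)"
proof -
  assume j: "j < n"
  define raw where "raw = map (\<lambda>i. if i \<in> FIX n \<pi> then \<phi> i else int (\<pi> i)) [1..<n+1]"
  have dfe: "df n k (\<pi>, \<phi>) = red_pos raw" unfolding df_def raw_def fst_conv snd_conv by (rule refl)
  have rj: "raw ! j = (if \<phi> (Suc j) \<noteq> 0 then \<phi> (Suc j) else int (\<pi> (Suc j)))"
    unfolding raw_def by (rule raw_df_nth[OF j])
  have "df n k (\<pi>, \<phi>) ! j = (if 0 < raw ! j then int (card {y \<in> set raw. 0 < y \<and> y < raw ! j}) + 1 else raw ! j)"
    unfolding dfe by (rule red_pos_nth) (simp add: raw_def j)
  moreover have "\<phi> (Suc j) \<le> 0" using phi_range by simp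
  moreover have "1 \<le> \<pi> (Suc j)" using pi_pos[of "Suc j"] j by simp
  ultimately show ?thesis unfolding rj raw_def[symmetric] by auto
qed

lemma length_df: "length (df n k (\<pi>, \<phi>)) = n"
  unfolding df_def red_pos_def by simp

lemma length_sig: "length (sig n (\<pi>, \<phi>)) = n"
  unfolding sig_def by simp

lemma sig_nth: "j < n \<Longrightarrow> sig n (\<pi>, \<phi>) ! j = \<phi> (Suc j)"
  unfolding sig_def by (simp add: nth_map_upt)

lemma zeroed_df: "zeroed (df n k (\<pi>, \<phi>)) = sig n (\<pi>, \<phi>)" and df_nz: "0 \<notin> set (df n k (\<pi>, \<phi>))"
proof -
  have pos: "0 < df n k (\<pi>, \<phi>) ! j" if "j < n" "\<phi> (Suc j) = 0" for j
    using df_nth[OF that(1)] that(2) by simp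
  have neg: "df n k (\<pi>, \<phi>) ! j = \<phi> (Suc j) \<and> \<phi> (Suc j) < 0" if "j < n" "\<phi> (Suc j) \<noteq> 0" for j
    using df_nth[OF that(1)] that(2) phi_range[of "Suc j"] by simp
  show "zeroed (df n k (\<pi>, \<phi>)) = sig n (\<pi>, \<phi>)"
  proof (rule nth_equalityI)
    show "length (zeroed (df n k (\<pi>, \<phi>))) = length (sig n (\<pi>, \<phi>))"
      unfolding zeroed_def using length_df length_sig by simp
    fix j assume "j < length (zeroed (df n k (\<pi>, \<phi>)))"
    then have j: "j < n" unfolding zeroed_def using length_df by simp
    show "zeroed (df n k (\<pi>, \<phi>)) ! j = sig n (\<pi>, \<phi>) ! j"
      unfolding zeroed_def using j length_df pos[OF j] neg[OF j] sig_nth[OF j]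
      by (cases "\<phi> (Suc j) = 0") auto
  qed
  show "0 \<notin> set (df n k (\<pi>, \<phi>))"
  proof
    assume "0 \<in> set (df n k (\<pi>, \<phi>))"
    then obtain j where j: "j < n" "df n k (\<pi>, \<phi>) ! j = 0" using length_df by (metis in_set_conv_nth)
    then show False using pos[OF j(1)] neg[OF j(1)] by (cases "\<phi> (Suc j) = 0") auto
  qed
qed

lemma df_fill: "df n k (\<pi>, \<phi>) = fillL (Der n k (\<pi>, \<phi>)) 0 (sig n (\<pi>, \<phi>))"
  using fillL_zeroed[OF df_nz] zeroed_df unfolding Der_def by simp

lemma count_take_sig: "j \<le> n \<Longrightarrow> count_list (take j (sig n (\<pi>, \<phi>))) 0 = rk C (Suc j)"
proof -
  assume j: "j \<le> n"
  have "take j (sig n (\<pi>, \<phi>)) = map \<phi> [1..<j+1]" unfolding sig_def using j by (simp add: take_map)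
  then have "count_list (take j (sig n (\<pi>, \<phi>))) 0 = card {i\<in>{1..<j+1}. \<phi> i = 0}"
    by (simp add: count_list_map_upt)
  also have "{i\<in>{1..<j+1}. \<phi> i = 0} = {y\<in>C. y < Suc j}" unfolding C_def' using j by auto
  finally show ?thesis unfolding rk_def by simp
qed

lemma count_sig0: "count_list (sig n (\<pi>, \<phi>)) 0 = card C"
proof -
  have "count_list (sig n (\<pi>, \<phi>)) 0 = card {i\<in>{1..<n+1}. \<phi> i = 0}"
    unfolding sig_def by (simp add: count_list_map_upt)
  also have "{i\<in>{1..<n+1}. \<phi> i = 0} = C" unfolding C_def' by auto
  finally show ?thesis .
qed

lemma len_filter_zeroed: "0 \<notin> set v \<Longrightarrow> length (filter (\<lambda>x. 0 < x) v) = count_list (zeroed v) 0"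
  by (induction v) (auto simp: zeroed_def)

lemma Der_len: "length (Der n k (\<pi>, \<phi>)) = card C"
  using len_filter_zeroed[OF df_nz] zeroed_df count_sig0 unfolding Der_def Pos_def by simp

lemma pos_set_raw:
  "{y \<in> set (map (\<lambda>i. if i \<in> FIX n \<pi> then \<phi> i else int (\<pi> i)) [1..<n+1]). 0 < y} = int ` C"
proof -
  have "{y \<in> set (map (\<lambda>i. if i \<in> FIX n \<pi> then \<phi> i else int (\<pi> i)) [1..<n+1]). 0 < y}
     = int ` \<pi> ` C"
  proof
    show "{y \<in> set (map (\<lambda>i. if i \<in> FIX n \<pi> then \<phi> i else int (\<pi> i)) [1..<n+1]). 0 < y} \<subseteq> int ` \<pi> ` C"
    proof
      fix y assume "y \<in> {y \<in> set (map (\<lambda>i. if i \<in> FIX n \<pi> then \<phi> i else int (\<pi> i)) [1..<n+1]). 0 < y}"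
      then have yi: "y \<in> (\<lambda>i. if i \<in> FIX n \<pi> then \<phi> i else int (\<pi> i)) ` {1..<n+1}" "0 < y" by auto
      then obtain i where i0: "i \<in> {1..<n+1}" "y = (if i \<in> FIX n \<pi> then \<phi> i else int (\<pi> i))"
        by blast
      then have i: "i \<in> {1..n}" "y = (if i \<in> FIX n \<pi> then \<phi> i else int (\<pi> i))" "0 < y"
        using yi by auto
      have "i \<notin> FIX n \<pi>" using i phi_range[of i] by auto
      then have "i \<in> C" "y = int (\<pi> i)" using i phi_nz_iff[of i] unfolding C_def' by auto
      then show "y \<in> int ` \<pi> ` C" by blast
    qed
    show "int ` \<pi> ` C \<subseteq> {y \<in> set (map (\<lambda>i. if i \<in> FIX n \<pi> then \<phi> i else int (\<pi> i)) [1..<n+1]). 0 < y}"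
    proof
      fix y assume "y \<in> int ` \<pi> ` C"
      then obtain i where i: "i \<in> C" "y = int (\<pi> i)" by blast
      then have "i \<notin> FIX n \<pi>" "i \<in> {1..n}" using phi_nz_iff[of i] unfolding C_def' by auto
      moreover have "0 < y" using i pi_pos[of i] unfolding C_def' by auto
      ultimately show "y \<in> {y \<in> set (map (\<lambda>i. if i \<in> FIX n \<pi> then \<phi> i else int (\<pi> i)) [1..<n+1]). 0 < y}"
        using i by force
    qed
  qed
  then show ?thesis using pi_img_C by simp
qed

lemma Der_nth: "t \<in> C \<Longrightarrow> Der n k (\<pi>, \<phi>) ! rk C t = int (rk C (\<pi> t)) + 1"
proof -
  assume t: "t \<in> C"
  define j where "j = t - 1"
  have tj: "t = Suc j" "j < n" using t unfolding C_def' j_def by auto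
  have "df n k (\<pi>, \<phi>) ! j = Der n k (\<pi>, \<phi>) ! rk C t"
    using df_fill fillL_nth[of j "sig n (\<pi>, \<phi>)" "Der n k (\<pi>, \<phi>)" 0] tj sig_nth[OF tj(2)]
      count_take_sig[of j] t length_sig unfolding C_def' by simp
  moreover have "df n k (\<pi>, \<phi>) ! j = int (card {y \<in> int ` C. y < int (\<pi> t)}) + 1"
  proof -
    have "\<phi> (Suc j) = 0" using t tj unfolding C_def' by simp
    then have "df n k (\<pi>, \<phi>) ! j = int (card {y \<in> set (map (\<lambda>i. if i \<in> FIX n \<pi> then \<phi> i else int (\<pi> i)) [1..<n+1]).
                     0 < y \<and> y < int (\<pi> (Suc j))}) + 1" using df_nth[OF tj(2)] by simp
    also have "{y \<in> set (map (\<lambda>i. if i \<in> FIX n \<pi> then \<phi> i else int (\<pi> i)) [1..<n+1]). 0 < y \<and> y < int (\<pi> (Suc j))}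
       = {y \<in> int ` C. y < int (\<pi> t)}" using pos_set_raw tj by blast
    finally show ?thesis .
  qed
  moreover have "{y \<in> int ` C. y < int (\<pi> t)} = int ` {c\<in>C. c < \<pi> t}" by auto
  moreover have "card (int ` {c\<in>C. c < \<pi> t}) = rk C (\<pi> t)"
    unfolding rk_def by (rule card_image) (simp add: inj_on_def)
  ultimately show ?thesis by simp
qed

end


declare upt_Suc [simp del]

context
  fixes n k :: nat and \<pi> :: "nat \<Rightarrow> nat" and \<phi> :: "nat \<Rightarrow> int"
  assumes arr: "(\<pi>, \<phi>) \<in> arrangements n k" and k1: "1 \<le> k"
begin

abbreviation "CC \<equiv> Cset n (\<pi>, \<phi>)"

lemmas A = perm[OF arr] phi_nz_iff[OF arr] phi_out[OF arr] phi_range[OF arr] phi_nz_fix[OF arr]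
  C_def'[OF arr] C_fin[OF arr] C_nfix[OF arr] pi_C[OF arr] pi_pos[OF arr] length_sig[OF arr]
  sig_nth[OF arr] count_take_sig[OF arr] Der_nth[OF arr] Der_len[OF arr] count_sig0[OF arr]

definition Rf :: "nat \<Rightarrow> int" where
  "Rf t = (if \<phi> t \<noteq> 0 \<and> \<phi> t \<noteq> - int k then \<phi> t else int (\<pi> t))"

definition Gf :: "nat \<Rightarrow> int" where
  "Gf t = (if \<phi> t = 0 then 2 * (int (rk CC (\<pi> t)) + 1)
     else if \<phi> t = - int k then 2 * int (rk CC t) + 1 else \<phi> t)"

lemma rawpf_nth: "j < n \<Longrightarrow>
  map (\<lambda>i. if i \<in> FIX n \<pi> \<and> \<phi> i \<noteq> - int k then \<phi> i else int (\<pi> i)) [1..<n+1] ! j = Rf (Suc j)"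
proof -
  assume j: "j < n"
  have "map (\<lambda>i. if i \<in> FIX n \<pi> \<and> \<phi> i \<noteq> - int k then \<phi> i else int (\<pi> i)) [1..<n+1] ! j
      = (if Suc j \<in> FIX n \<pi> \<and> \<phi> (Suc j) \<noteq> - int k then \<phi> (Suc j) else int (\<pi> (Suc j)))"
    using j by (simp add: nth_map_upt)
  then show ?thesis unfolding Rf_def using A(2)[of "Suc j"] by simp
qed

lemma G_nth: "j < n \<Longrightarrow> fillR k (Der n k (\<pi>, \<phi>)) 0 (sig n (\<pi>, \<phi>)) ! j = Gf (Suc j)"
proof -
  assume j: "j < n"
  have c: "count_list (take j (sig n (\<pi>, \<phi>))) 0 = rk CC (Suc j)" using A(13)[of j] j by simp
  show ?thesis
  proof (cases "\<phi> (Suc j) = 0")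
    case True
    then have "Suc j \<in> CC" using A(6) j by simp
    then show ?thesis using fillR_nth[of j "sig n (\<pi>, \<phi>)" k "Der n k (\<pi>, \<phi>)" 0] A(11,12) j c True A(14)
      unfolding Gf_def by simp
  next
    case False
    then show ?thesis using fillR_nth[of j "sig n (\<pi>, \<phi>)" k "Der n k (\<pi>, \<phi>)" 0] A(11,12) j c
      unfolding Gf_def by simp
  qed
qed

lemma cmp:
  assumes p: "1 \<le> p" "Suc p \<le> n"
  shows "Rf p > Rf (Suc p) \<longleftrightarrow> Gf p > Gf (Suc p)"
proof -
  have fin: "finite CC" by (rule A(7))
  have k0: "- int k \<noteq> 0" using k1 by simp
  have negv: "Rf t = \<phi> t \<and> Gf t = \<phi> t \<and> \<phi> t < 0" if "\<phi> t \<noteq> 0" "\<phi> t \<noteq> - int k" for t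
    using that A(4)[of t] unfolding Rf_def Gf_def by auto
  have inC: "t \<in> CC" if "\<phi> t = 0" "1 \<le> t" "t \<le> n" for t using that A(6) by simp
  have posv: "0 < Rf t \<and> 0 < Gf t" if "\<not> (\<phi> t \<noteq> 0 \<and> \<phi> t \<noteq> - int k)" "1 \<le> t" "t \<le> n" for t
  proof (cases "\<phi> t = 0")
    case True
    then show ?thesis using A(10)[of t] that unfolding Rf_def Gf_def by auto
  next
    case False
    then have "\<phi> t = - int k" using that by auto
    moreover have "\<pi> t = t" using A(5)[of t] False by simp
    ultimately show ?thesis using that k0 unfolding Rf_def Gf_def by auto
  qed
  have Z: "Rf t = int (\<pi> t) \<and> Gf t = 2 * (int (rk CC (\<pi> t)) + 1)" if "\<phi> t = 0" for t
    using that k0 unfolding Rf_def Gf_def by auto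
  have X: "Rf t = int t \<and> Gf t = 2 * int (rk CC t) + 1 \<and> t \<notin> CC" if "\<phi> t = - int k" for t
    using that k0 A(5)[of t] A(6) unfolding Rf_def Gf_def by auto
  show ?thesis
  proof (cases "\<phi> p \<noteq> 0 \<and> \<phi> p \<noteq> - int k")
    case np: True
    show ?thesis
    proof (cases "\<phi> (Suc p) \<noteq> 0 \<and> \<phi> (Suc p) \<noteq> - int k")
      case True then show ?thesis using negv np by simp
    next
      case False
      then show ?thesis using negv[of p] np posv[of "Suc p"] p by auto
    qed
  next
    case pp: False
    show ?thesis
    proof (cases "\<phi> (Suc p) \<noteq> 0 \<and> \<phi> (Suc p) \<noteq> - int k")
      case True then show ?thesis using negv[of "Suc p"] posv[of p] pp p by auto
    next
      case False
      consider (a) "\<phi> p = 0" "\<phi> (Suc p) = 0" | (b) "\<phi> p = 0" "\<phi> (Suc p) = - int k"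
        | (c) "\<phi> p = - int k" "\<phi> (Suc p) = 0" | (d) "\<phi> p = - int k" "\<phi> (Suc p) = - int k"
        using pp False by blast
      then show ?thesis
      proof cases
        case a
        have c1: "\<pi> p \<in> CC" "\<pi> (Suc p) \<in> CC" using inC[of p] inC[of "Suc p"] a p A(9) by auto
        show ?thesis using Z[OF a(1)] Z[OF a(2)] rk_less_iff[OF fin c1(2) c1(1)] by auto
      next
        case b
        have pC: "p \<in> CC" using inC[of p] b p by auto
        have c1: "\<pi> p \<in> CC" using A(9) pC by blast
        have rS: "rk CC (Suc p) = Suc (rk CC p)" using rk_Suc[OF fin, of p] pC by simp
        have ne: "\<pi> p \<noteq> Suc p" using c1 X[OF b(2)] by auto
        have "rk CC p < rk CC (\<pi> p) \<longleftrightarrow> p < \<pi> p" by (rule rk_less_iff[OF fin pC c1])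
        then show ?thesis using Z[OF b(1)] X[OF b(2)] rS ne by auto
      next
        case c
        have pC: "p \<notin> CC" using X[OF c(1)] by simp
        have sC: "Suc p \<in> CC" using inC[of "Suc p"] c p by auto
        have c1: "\<pi> (Suc p) \<in> CC" using A(9) sC by blast
        have rS: "rk CC (Suc p) = rk CC p" using rk_Suc[OF fin, of p] pC by simp
        have ne: "\<pi> (Suc p) \<noteq> p" using c1 pC by auto
        have "rk CC (\<pi> (Suc p)) < rk CC (Suc p) \<longleftrightarrow> \<pi> (Suc p) < Suc p" by (rule rk_less_iff[OF fin c1 sC])
        then show ?thesis using X[OF c(1)] Z[OF c(2)] rS ne by auto
      next
        case d
        have pC: "p \<notin> CC" using X[OF d(1)] by simp
        have rS: "rk CC (Suc p) = rk CC p" using rk_Suc[OF fin, of p] pC by simp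
        show ?thesis using X[OF d(1)] X[OF d(2)] rS by auto
      qed
    qed
  qed
qed

lemma DES_fill: "DES n k (\<pi>, \<phi>) = DES_word (fillR k (Der n k (\<pi>, \<phi>)) 0 (sig n (\<pi>, \<phi>)))"
proof -
  define raw where "raw = map (\<lambda>i. if i \<in> FIX n \<pi> \<and> \<phi> i \<noteq> - int k then \<phi> i else int (\<pi> i)) [1..<n+1]"
  define G where "G = fillR k (Der n k (\<pi>, \<phi>)) 0 (sig n (\<pi>, \<phi>))"
  have "DES n k (\<pi>, \<phi>) = DES_word (red_pos raw)"
    unfolding DES_def pf_def raw_def fst_conv snd_conv by (rule refl)
  also have "\<dots> = DES_word raw" by (rule DES_red_pos)
  also have "\<dots> = DES_word G"
  proof -
    have lr: "length raw = n" unfolding raw_def by simp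
    have lG: "length G = n" unfolding G_def using A(11) by simp
    have "(raw ! (i - 1) > raw ! i) \<longleftrightarrow> (G ! (i - 1) > G ! i)" if "1 \<le> i" "i < n" for i
    proof -
      have "raw ! (i - 1) = Rf i" "raw ! i = Rf (Suc i)" unfolding raw_def
        using rawpf_nth[of "i - 1"] rawpf_nth[of i] that by auto
      moreover have "G ! (i - 1) = Gf i" "G ! i = Gf (Suc i)" unfolding G_def
        using G_nth[of "i - 1"] G_nth[of i] that by auto
      ultimately show ?thesis using cmp[of i] that by simp
    qed
    then show ?thesis unfolding DES_word_def lr lG by blast
  qed
  finally show ?thesis unfolding G_def .
qed

lemma DEZ_fill: "DEZ n k (\<pi>, \<phi>) = DES_word (fillL (Der n k (\<pi>, \<phi>)) 0 (sig n (\<pi>, \<phi>)))"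
  unfolding DEZ_def using df_fill[OF arr] by simp

lemma fixi_count: "1 \<le> i \<Longrightarrow> fixi n i (\<pi>, \<phi>) = count_list (sig n (\<pi>, \<phi>)) (- int i)"
proof -
  assume i: "1 \<le> i"
  have "count_list (sig n (\<pi>, \<phi>)) (- int i) = card {j\<in>{1..<n+1}. \<phi> j = - int i}"
    unfolding sig_def by (simp add: count_list_map_upt)
  also have "{j\<in>{1..<n+1}. \<phi> j = - int i} = {j \<in> FIX n \<pi>. \<phi> j = - int i}"
  proof -
    have a: "j \<in> FIX n \<pi>" if "\<phi> j = - int i" for j using A(2)[of j] that i by simp
    have b: "j \<in> {1..<n+1}" if "j \<in> FIX n \<pi>" for j using that unfolding FIX_def by auto
    show ?thesis using a b by blast
  qed
  finally show ?thesis unfolding fixi_def by simp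
qed

lemma Der_good: "goodD (Der n k (\<pi>, \<phi>))"
proof -
  have fin: "finite CC" by (rule A(7))
  have idx: "\<exists>t\<in>CC. j = rk CC t" if "j < length (Der n k (\<pi>, \<phi>))" for j
    using that rk_image[OF fin] A(15) by (metis atLeast0LessThan imageE lessThan_iff)
  have p1: "0 < Der n k (\<pi>, \<phi>) ! j \<and> Der n k (\<pi>, \<phi>) ! j \<noteq> int (Suc j)"
    if jl: "j < length (Der n k (\<pi>, \<phi>))" for j
  proof -
    obtain t where t: "t \<in> CC" "j = rk CC t" using idx jl by blast
    have "rk CC (\<pi> t) \<noteq> rk CC t" using rk_inj[OF fin] A(8,9) t(1) by (metis inj_on_eq_iff)
    then show ?thesis using A(14)[OF t(1)] t by simp
  qed
  have "distinct (Der n k (\<pi>, \<phi>))"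
  proof (rule distinct_conv_nth[THEN iffD2], intro allI impI)
    fix i j assume ij: "i < length (Der n k (\<pi>, \<phi>))" "j < length (Der n k (\<pi>, \<phi>))" "i \<noteq> j"
    obtain t where t: "t \<in> CC" "i = rk CC t" using idx ij by blast
    obtain t' where t': "t' \<in> CC" "j = rk CC t'" using idx ij by blast
    have "t \<noteq> t'" using t t' ij by auto
    then have "\<pi> t \<noteq> \<pi> t'" using permutes_inj[OF A(1)] by (metis injD)
    then have "rk CC (\<pi> t) \<noteq> rk CC (\<pi> t')" using rk_inj[OF fin] A(9) t t' by (metis inj_on_eq_iff)
    then show "Der n k (\<pi>, \<phi>) ! i \<noteq> Der n k (\<pi>, \<phi>) ! j" using A(14) t t' by simp
  qed
  then show ?thesis unfolding goodD_def using p1 by blast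
qed

end


declare upt_Suc [simp del]

lemma arr_inj:
  assumes a: "a \<in> arrangements n k" and b: "b \<in> arrangements n k"
    and s: "sig n a = sig n b" and d: "Der n k a = Der n k b"
  shows "a = b"
proof -
  obtain \<pi> \<phi> where a': "a = (\<pi>, \<phi>)" by fastforce
  obtain \<pi>' \<phi>' where b': "b = (\<pi>', \<phi>')" by fastforce
  have A: "(\<pi>, \<phi>) \<in> arrangements n k" using a a' by simp
  have B: "(\<pi>', \<phi>') \<in> arrangements n k" using b b' by simp
  have ph: "\<phi> = \<phi>'"
  proof
    fix t show "\<phi> t = \<phi>' t"
    proof (cases "t \<in> {1..n}")
      case True
      then have "t - 1 < n" "Suc (t - 1) = t" by auto
      then show ?thesis using sig_nth[OF A, of "t - 1"] sig_nth[OF B, of "t - 1"] s a' b' by simp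
    next
      case False then show ?thesis using phi_out[OF A] phi_out[OF B] by simp
    qed
  qed
  have CC: "Cset n (\<pi>, \<phi>) = Cset n (\<pi>', \<phi>')" unfolding Cset_def using ph by simp
  have pi: "\<pi> = \<pi>'"
  proof
    fix t show "\<pi> t = \<pi>' t"
    proof (cases "t \<in> Cset n (\<pi>, \<phi>)")
      case True
      have t': "t \<in> Cset n (\<pi>', \<phi>')" using True CC by simp
      have "int (rk (Cset n (\<pi>, \<phi>)) (\<pi> t)) + 1 = int (rk (Cset n (\<pi>, \<phi>)) (\<pi>' t)) + 1"
        using Der_nth[OF A True] Der_nth[OF B t'] d a' b' CC by simp
      then have "rk (Cset n (\<pi>, \<phi>)) (\<pi> t) = rk (Cset n (\<pi>, \<phi>)) (\<pi>' t)" by simp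
      moreover have "\<pi> t \<in> Cset n (\<pi>, \<phi>)" "\<pi>' t \<in> Cset n (\<pi>, \<phi>)"
        using pi_C[OF A True] pi_C[OF B t'] CC by auto
      ultimately show ?thesis using rk_inj[OF C_fin[OF A]] by (metis inj_on_eq_iff)
    next
      case False
      show ?thesis
      proof (cases "t \<in> {1..n}")
        case True
        then have "\<phi> t \<noteq> 0" using False unfolding Cset_def by simp
        then show ?thesis using phi_nz_fix[OF A] phi_nz_fix[OF B] ph by simp
      next
        case False
        then show ?thesis using perm[OF A] perm[OF B] by (simp add: permutes_not_in)
      qed
    qed
  qed
  show ?thesis using a' b' ph pi by simp
qed

lemma count_zero_card: "count_list w 0 = card {t\<in>{1..length w}. w ! (t - 1) = (0::int)}"
proof -
  have "count_list w 0 = length (filter ((=) 0) w)" by (simp add: count_list_eq_length_filter)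
  also have "\<dots> = card {i. i < length w \<and> 0 = w ! i}" by (rule length_filter_conv_card)
  also have "\<dots> = card (Suc ` {i. i < length w \<and> 0 = w ! i})" by (simp add: card_image)
  also have "Suc ` {i. i < length w \<and> 0 = w ! i} = {t\<in>{1..length w}. w ! (t - 1) = 0}"
  proof
    show "Suc ` {i. i < length w \<and> 0 = w ! i} \<subseteq> {t\<in>{1..length w}. w ! (t - 1) = 0}" by auto
    show "{t\<in>{1..length w}. w ! (t - 1) = 0} \<subseteq> Suc ` {i. i < length w \<and> 0 = w ! i}"
    proof
      fix t assume "t \<in> {t\<in>{1..length w}. w ! (t - 1) = 0}"
      then have "t = Suc (t - 1)" "t - 1 < length w" "0 = w ! (t - 1)" by auto
      then show "t \<in> Suc ` {i. i < length w \<and> 0 = w ! i}" by blast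
    qed
  qed
  finally show ?thesis .
qed

lemma arr_construct:
  assumes k1: "1 \<le> k" and a0: "(\<pi>0, \<phi>0) \<in> arrangements n k" and D: "D = Der n k (\<pi>0, \<phi>0)"
    and lw: "length w = n" and rw: "\<forall>x\<in>set w. inR k x" and cw: "count_list w 0 = length D"
  shows "\<exists>a\<in>arrangements n k. sig n a = w \<and> Der n k a = D"
proof -
  define N where "N = length D"
  define C0 where "C0 = Cset n (\<pi>0, \<phi>0)"
  have fC0: "finite C0" using C_fin[OF a0] C0_def by simp
  have NC0: "N = card C0" unfolding N_def C0_def D using Der_len[OF a0] by simp
  have gD: "goodD D" using Der_good[OF a0 k1] D by simp
  have Dv: "1 \<le> D ! j \<and> D ! j \<le> int N" if "j < N" for j
  proof -
    have "j \<in> rk C0 ` C0" using rk_image[OF fC0] that NC0 by simp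
    then obtain t where t: "t \<in> C0" "j = rk C0 t" by blast
    have "D ! j = int (rk C0 (\<pi>0 t)) + 1" using Der_nth[OF a0] t D C0_def by simp
    moreover have "rk C0 (\<pi>0 t) < card C0" using rk_bound[OF fC0] pi_C[OF a0] t C0_def by simp
    ultimately show ?thesis using NC0 by simp
  qed
  have Dd: "distinct D" "\<And>j. j < N \<Longrightarrow> D ! j \<noteq> int (Suc j)" using gD unfolding goodD_def N_def by auto
  define C where "C = {t\<in>{1..n}. w ! (t - 1) = 0}"
  have fC: "finite C" unfolding C_def by simp
  have cardC: "card C = N" using count_zero_card[of w] cw lw unfolding C_def N_def by simp
  have injrk: "inj_on (rk C) C" by (rule rk_inj[OF fC])
  have imrk: "rk C ` C = {0..<N}" using rk_image[OF fC] cardC by simp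
  define g where "g = the_inv_into C (rk C)"
  have g1: "g e \<in> C" and g2: "rk C (g e) = e" if "e < N" for e
  proof -
    have "e \<in> rk C ` C" using imrk that by simp
    then show "g e \<in> C" "rk C (g e) = e" unfolding g_def
      using the_inv_into_into[OF injrk] f_the_inv_into_f[OF injrk] by auto
  qed
  define e where "e t = nat (D ! rk C t) - 1" for t
  have e1: "e t < N" and e2: "int (e t) + 1 = D ! rk C t" and e3: "e t \<noteq> rk C t" if "t \<in> C" for t
  proof -
    have j: "rk C t < N" using rk_bound[OF fC that] cardC by simp
    show "e t < N" "int (e t) + 1 = D ! rk C t" using Dv[OF j] unfolding e_def by auto
    show "e t \<noteq> rk C t" using Dv[OF j] Dd(2)[OF j] unfolding e_def by auto
  qed
  define \<pi> where "\<pi> t = (if t \<in> C then g (e t) else t)" for t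
  define \<phi> where "\<phi> t = (if t \<in> {1..n} then w ! (t - 1) else 0)" for t
  have piC: "\<pi> t \<in> C" and rkpi: "rk C (\<pi> t) = e t" if "t \<in> C" for t
    using g1[OF e1[OF that]] g2[OF e1[OF that]] that unfolding \<pi>_def by auto
  have pinC: "\<pi> t \<noteq> t" if "t \<in> C" for t using rkpi[OF that] e3[OF that] by auto
  have Csub: "C \<subseteq> {1..n}" unfolding C_def by auto
  have inj: "inj_on \<pi> {1..n}"
  proof (rule inj_onI)
    fix s t assume st: "s \<in> {1..n}" "t \<in> {1..n}" "\<pi> s = \<pi> t"
    show "s = t"
    proof (cases "s \<in> C"; cases "t \<in> C")
      assume s: "s \<in> C" and t: "t \<in> C"
      have "e s = e t" using rkpi[OF s] rkpi[OF t] st(3) by metis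
      then have "D ! rk C s = D ! rk C t" using e2[OF s] e2[OF t] by simp
      moreover have "rk C s < length D" "rk C t < length D"
        using rk_bound[OF fC s] rk_bound[OF fC t] cardC N_def by auto
      ultimately have "rk C s = rk C t" using Dd(1) by (simp add: nth_eq_iff_index_eq)
      then show "s = t" using injrk s t by (metis inj_on_eq_iff)
    next
      assume s: "s \<in> C" and t: "t \<notin> C"
      then show "s = t" using piC[OF s] st(3) unfolding \<pi>_def by auto
    next
      assume s: "s \<notin> C" and t: "t \<in> C"
      then show "s = t" using piC[OF t] st(3) unfolding \<pi>_def by auto
    next
      assume "s \<notin> C" "t \<notin> C"
      then show "s = t" using st(3) unfolding \<pi>_def by auto
    qed
  qed
  have img: "\<pi> ` {1..n} \<subseteq> {1..n}"
  proof
    fix y assume "y \<in> \<pi> ` {1..n}"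
    then obtain t where t: "t \<in> {1..n}" "y = \<pi> t" by blast
    show "y \<in> {1..n}"
    proof (cases "t \<in> C")
      case True then show ?thesis using t piC[OF True] Csub by blast
    next
      case False then show ?thesis using t unfolding \<pi>_def by simp
    qed
  qed
  have perm: "\<pi> permutes {1..n}"
  proof (rule bij_imp_permutes)
    show "bij_betw \<pi> {1..n} {1..n}" unfolding bij_betw_def using inj endo_inj_surj[OF _ img inj] by simp
    show "\<pi> t = t" if "t \<notin> {1..n}" for t using that Csub unfolding \<pi>_def by auto
  qed
  have FIXe: "FIX n \<pi> = {1..n} - C"
  proof
    show "FIX n \<pi> \<subseteq> {1..n} - C" unfolding FIX_def using pinC by auto
    show "{1..n} - C \<subseteq> FIX n \<pi>" unfolding FIX_def \<pi>_def by auto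
  qed
  have arr: "(\<pi>, \<phi>) \<in> arrangements n k"
    unfolding arrangements_def
  proof (simp only: mem_Collect_eq case_prod_conv, intro conjI perm allI)
    fix i
    show "if i \<in> FIX n \<pi> then \<phi> i \<in> {- int k..- 1} else \<phi> i = 0"
    proof (cases "i \<in> FIX n \<pi>")
      case True
      then have i: "i \<in> {1..n}" "w ! (i - 1) \<noteq> 0" using FIXe unfolding C_def by auto
      have "w ! (i - 1) \<in> set w" using i lw by auto
      then have "- int k \<le> w ! (i - 1) \<and> w ! (i - 1) \<le> 0" using rw unfolding inR_def by blast
      then show ?thesis using True i unfolding \<phi>_def by auto
    next
      case False
      then show ?thesis using FIXe unfolding \<phi>_def C_def by auto
    qed
  qed
  have sg: "sig n (\<pi>, \<phi>) = w"
  proof (rule nth_equalityI)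
    show "length (sig n (\<pi>, \<phi>)) = length w" using lw length_sig[OF arr] by simp
    fix j assume "j < length (sig n (\<pi>, \<phi>))"
    then have j: "j < n" using length_sig[OF arr] by simp
    show "sig n (\<pi>, \<phi>) ! j = w ! j" using sig_nth[OF arr j] j unfolding \<phi>_def by simp
  qed
  have CC: "Cset n (\<pi>, \<phi>) = C" unfolding Cset_def C_def \<phi>_def by auto
  have Der: "Der n k (\<pi>, \<phi>) = D"
  proof (rule nth_equalityI)
    show "length (Der n k (\<pi>, \<phi>)) = length D" using Der_len[OF arr] CC cardC N_def by simp
    fix j assume "j < length (Der n k (\<pi>, \<phi>))"
    then have "j < N" using Der_len[OF arr] CC cardC by simp
    then have "j \<in> rk C ` C" using imrk by simp
    then obtain t where t: "t \<in> C" "j = rk C t" by blast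
    have "Der n k (\<pi>, \<phi>) ! j = int (rk C (\<pi> t)) + 1" using Der_nth[OF arr] t CC by simp
    also have "\<dots> = D ! j" using rkpi[OF t(1)] e2[OF t(1)] t by simp
    finally show "Der n k (\<pi>, \<phi>) ! j = D ! j" .
  qed
  show ?thesis using arr sg Der by blast
qed


declare upt_Suc [simp del]

lemma arrangements_finite: "finite (arrangements n k)"
proof -
  define Phis where "Phis = (\<lambda>w t. if t \<in> {1..n} then w ! (t - 1) else (0::int)) ` {w. set w \<subseteq> {- int k..0} \<and> length w = n}"
  have "arrangements n k \<subseteq> {\<pi>. \<pi> permutes {1..n}} \<times> Phis"
  proof
    fix a assume a: "a \<in> arrangements n k"
    obtain \<pi> \<phi> where a': "a = (\<pi>, \<phi>)" by fastforce
    have A: "(\<pi>, \<phi>) \<in> arrangements n k" using a a' by simp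
    have "\<phi> = (\<lambda>t. if t \<in> {1..n} then sig n (\<pi>, \<phi>) ! (t - 1) else 0)"
    proof
      fix t show "\<phi> t = (if t \<in> {1..n} then sig n (\<pi>, \<phi>) ! (t - 1) else 0)"
      proof (cases "t \<in> {1..n}")
        case True
        then have "t - 1 < n" "Suc (t - 1) = t" by auto
        then show ?thesis using sig_nth[OF A, of "t - 1"] True by simp
      next
        case False
        have "\<phi> t = 0" using phi_out[OF A] False by blast
        then show ?thesis unfolding if_not_P[OF False] .
      qed
    qed
    moreover have "set (sig n (\<pi>, \<phi>)) \<subseteq> {- int k..0}" using phi_range[OF A] unfolding sig_def by auto
    moreover have "length (sig n (\<pi>, \<phi>)) = n" by (rule length_sig[OF A])
    ultimately have "\<phi> \<in> Phis" unfolding Phis_def by blast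
    then show "a \<in> {\<pi>. \<pi> permutes {1..n}} \<times> Phis" using perm[OF A] a' by simp
  qed
  moreover have "finite ({\<pi>. \<pi> permutes {1..n}} \<times> Phis)"
    unfolding Phis_def by (intro finite_cartesian_product finite_permutations finite_imageI finite_lists_length_eq) auto
  ultimately show ?thesis using finite_subset by blast
qed

lemma sig_bij:
  assumes k1: "1 \<le> k" and a0: "a0 \<in> arrangements n k" and D: "D = Der n k a0"
  shows "bij_betw (sig n) {a \<in> arrangements_m n k m. Der n k a = D} (Wset n k D m)"
proof -
  obtain \<pi>0 \<phi>0 where a0': "a0 = (\<pi>0, \<phi>0)" by fastforce
  have A0: "(\<pi>0, \<phi>0) \<in> arrangements n k" using a0 a0' by simp
  have inj: "inj_on (sig n) {a \<in> arrangements_m n k m. Der n k a = D}"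
    by (rule inj_onI) (use arr_inj in \<open>auto simp: arrangements_m_def\<close>)
  have sub: "sig n ` {a \<in> arrangements_m n k m. Der n k a = D} \<subseteq> Wset n k D m"
  proof
    fix w assume "w \<in> sig n ` {a \<in> arrangements_m n k m. Der n k a = D}"
    then obtain a where a: "a \<in> arrangements_m n k m" "Der n k a = D" "w = sig n a" by blast
    obtain \<pi> \<phi> where a': "a = (\<pi>, \<phi>)" by fastforce
    have A: "(\<pi>, \<phi>) \<in> arrangements n k" using a a' unfolding arrangements_m_def by simp
    have "length w = n" using a a' length_sig[OF A] by simp
    moreover have "\<forall>x\<in>set w. inR k x" using a a' phi_range[OF A] unfolding sig_def inR_def by auto
    moreover have "count_list w 0 = length D" using a a' count_sig0[OF A] Der_len[OF A] by simp
    moreover have "count_list w (- int i) = m i" if "i \<in> {1..k}" for i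
      using fixi_count[OF A k1, of i] that a a' unfolding arrangements_m_def by simp
    ultimately show "w \<in> Wset n k D m" unfolding Wset_def by blast
  qed
  have sup: "Wset n k D m \<subseteq> sig n ` {a \<in> arrangements_m n k m. Der n k a = D}"
  proof
    fix w assume w: "w \<in> Wset n k D m"
    obtain a where a: "a \<in> arrangements n k" "sig n a = w" "Der n k a = D"
      using arr_construct[OF k1 A0, of D w] w D a0' unfolding Wset_def by auto
    obtain \<pi> \<phi> where a': "a = (\<pi>, \<phi>)" by fastforce
    have A: "(\<pi>, \<phi>) \<in> arrangements n k" using a a' by simp
    have "fixi n i a = m i" if "i \<in> {1..k}" for i
      using fixi_count[OF A k1, of i] that a a' w unfolding Wset_def by simp
    then have "a \<in> arrangements_m n k m" using a unfolding arrangements_m_def by simp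
    then show "w \<in> sig n ` {a \<in> arrangements_m n k m. Der n k a = D}" using a by blast
  qed
  show ?thesis unfolding bij_betw_def using inj sub sup by blast
qed

lemma bij_restrict:
  assumes "bij_betw h X Y" "\<And>x. x \<in> X \<Longrightarrow> P x \<longleftrightarrow> Q (h x)"
  shows "bij_betw h {x\<in>X. P x} {y\<in>Y. Q y}"
  using assms unfolding bij_betw_def inj_on_def by auto

theorem theorem1p1:
  fixes n k :: nat and m :: "nat \<Rightarrow> nat" and \<tau> :: "nat \<Rightarrow> nat"
  assumes "1 \<le> n" and "1 \<le> k" and "\<tau> permutes {1..k}"
  shows "\<exists>\<Phi>. bij_betw \<Phi> (arrangements_m n k m) (arrangements_m n k (\<lambda>i. m (\<tau> i))) \<and>
           (\<forall>a \<in> arrangements_m n k m.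
               DEZ n k a = DES n k (\<Phi> a) \<and> Der n k a = Der n k (\<Phi> a))"
proof -
  note n1 = assms(1) and k1 = assms(2) and tp = assms(3)
  define A where "A = arrangements_m n k m"
  define B where "B = arrangements_m n k (\<lambda>i. m (\<tau> i))"
  have fA: "finite A" unfolding A_def arrangements_m_def
    by (rule finite_subset[OF _ arrangements_finite]) auto
  have fB: "finite B" unfolding B_def arrangements_m_def
    by (rule finite_subset[OF _ arrangements_finite]) auto
  have eq: "card {a\<in>A. (DEZ n k a, Der n k a) = x} = card {b\<in>B. (DES n k b, Der n k b) = x}" for x
  proof -
    obtain S D where x: "x = (S, D)" by fastforce
    show ?thesis
    proof (cases "\<exists>a0\<in>arrangements n k. Der n k a0 = D")
      case False
      then have e: "{a\<in>A. (DEZ n k a, Der n k a) = x} = {}" "{b\<in>B. (DES n k b, Der n k b) = x} = {}"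
        using x unfolding A_def B_def arrangements_m_def by auto
      show ?thesis by (simp only: e card.empty)
    next
      case True
      then obtain a0 where a0: "a0 \<in> arrangements n k" "D = Der n k a0" by metis
      obtain \<pi>0 \<phi>0 where a0': "a0 = (\<pi>0, \<phi>0)" by fastforce
      have A0: "(\<pi>0, \<phi>0) \<in> arrangements n k" using a0 a0' by simp
      have gD: "goodD D" using Der_good[OF A0 k1] a0 a0' by simp
      have bL: "bij_betw (sig n) {a\<in>{a \<in> arrangements_m n k m. Der n k a = D}. DEZ n k a = S}
                   {w\<in>Wset n k D m. DES_word (fillL D 0 w) = S}"
      proof (rule bij_restrict[OF sig_bij[OF k1 a0]])
        fix a assume a: "a \<in> {a \<in> arrangements_m n k m. Der n k a = D}"
        obtain \<pi> \<phi> where a': "a = (\<pi>, \<phi>)" by fastforce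
        have Aa: "(\<pi>, \<phi>) \<in> arrangements n k" using a a' unfolding arrangements_m_def by simp
        show "DEZ n k a = S \<longleftrightarrow> DES_word (fillL D 0 (sig n a)) = S"
          using DEZ_fill[OF Aa k1] a a' by simp
      qed
      have bR: "bij_betw (sig n) {a\<in>{a \<in> arrangements_m n k (\<lambda>i. m (\<tau> i)). Der n k a = D}. DES n k a = S}
                   {w\<in>Wset n k D (\<lambda>i. m (\<tau> i)). DES_word (fillR k D 0 w) = S}"
      proof (rule bij_restrict[OF sig_bij[OF k1 a0]])
        fix a assume a: "a \<in> {a \<in> arrangements_m n k (\<lambda>i. m (\<tau> i)). Der n k a = D}"
        obtain \<pi> \<phi> where a': "a = (\<pi>, \<phi>)" by fastforce
        have Aa: "(\<pi>, \<phi>) \<in> arrangements n k" using a a' unfolding arrangements_m_def by simp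
        show "DES n k a = S \<longleftrightarrow> DES_word (fillR k D 0 (sig n a)) = S"
          using DES_fill[OF Aa k1] a a' by simp
      qed
      have ce: "card {w\<in>Wset n k D m. DES_word (fillL D 0 w) = S}
          = card {w\<in>Wset n k D (\<lambda>i. m (\<tau> i)). DES_word (fillR k D 0 w) = S}"
        by (rule core_eq[where \<sigma>="inv \<tau>" and \<rho>=\<tau>, OF k1 permutes_inv[OF tp] tp _ _ gD n1])
           (simp_all add: permutes_inverses[OF tp])
      have e1: "{a\<in>A. (DEZ n k a, Der n k a) = x} = {a\<in>{a \<in> arrangements_m n k m. Der n k a = D}. DEZ n k a = S}"
        unfolding A_def x by auto
      have e2: "{b\<in>B. (DES n k b, Der n k b) = x} = {a\<in>{a \<in> arrangements_m n k (\<lambda>i. m (\<tau> i)). Der n k a = D}. DES n k a = S}"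
        unfolding B_def x by auto
      show ?thesis unfolding e1 e2 using bij_betw_same_card[OF bL] bij_betw_same_card[OF bR] ce by simp
    qed
  qed
  obtain \<Phi> where \<Phi>: "bij_betw \<Phi> A B" "\<forall>a\<in>A. (DES n k (\<Phi> a), Der n k (\<Phi> a)) = (DEZ n k a, Der n k a)"
    using card_fibers_bij[OF fA fB eq] by blast
  show ?thesis using \<Phi> unfolding A_def B_def by auto
qed


end
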